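(* In the setting of the context, the subalgebra of invariants $M_1^B=\{x\in M_1: b\triangleright x=\varepsilon(b)x \text{ for all } b\in B\}$ equals $M$.
   Context: $k$ is a field; $C_R(S)=\{r\in R:rs=sr\ \forall s\in S\}$. $N\subseteq M$ is a strongly separable, irreducible extension of $k$-algebras: $C_M(N)=k1$ and there are an $N$-bimodule map $E:M\to N$ and $x_1,\dots,x_n,y_1,\dots,y_n\in M$ with $\sum_iE(mx_i)y_i=m=\sum_ix_iE(y_im)$ for all $m\in M$, $E(1)\neq0$, $\sum_ix_iy_i\neq0$; normalized so that $E(1)=1$, whence $\sum_ix_iy_i=\lambda^{-1}1$ with $0\neq\lambda\in k$. Basic construction: given $S\subseteq R$, an $S$-bimodule map $E_S:R\to S$ with $E_S(1)=1$ and $r_i,s_i\in R$ with $\sum_iE_S(rr_i)s_i=r=\sum_ir_iE_S(s_ir)$ and $\sum_ir_is_i=\lambda^{-1}1$, set $R_1=R\otimes_SR$ with product $(a\otimes b)(c\otimes d)=aE_S(bc)\otimes d$, unit $\sum_ir_i\otimes s_i$, $R\subseteq R_1$ via $r\mapsto\sum_irr_i\otimes s_i$, Jones idempotent $e=1\otimes1$, $E_R:R_1\to R$, $a\otimes b\mapsto\lambda ab$; then $E_R$, $\lambda^{-1}r_i\otimes1$, $1\otimes s_i$ satisfy the same conditions with the same $\lambda$. From $(N\subseteq M,E)$ get $M_1,e_1,E_M$; from $(M\subseteq M_1,E_M)$ get $M_2,e_2,E_{M_1}$. Let $A=C_{M_1}(N)$, $B=C_{M_2}(M)$, $C=C_{M_2}(N)$.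 Depth 2 is assumed: $M_1$ is free as right $M$-module with basis in $A$, $M_2$ free as right $M_1$-module with basis in $B$. Let $F=E_M\circ E_{M_1}$, with values on $C$ in $k1\cong k$. The counit of $B$ is $\varepsilon(b)=\lambda^{-2}F(e_2e_1b)$, and $B$ acts on $M_1$ by $b\triangleright x=\lambda^{-1}E_{M_1}(bxe_2)$. *)

theory Defs
  imports "HOL-Algebra.Ring" "HOL-Algebra.Module"
begin

definition kalg :: "('k::field, 'a) module \<Rightarrow> bool" where
  "kalg R \<longleftrightarrow> ring R \<and>
     (\<forall>c a. a \<in> carrier R \<longrightarrow> c \<odot>\<^bsub>R\<^esub> a \<in> carrier R) \<and>
     (\<forall>c a b. a \<in> carrier R \<longrightarrow> b \<in> carrier R \<longrightarrow>
          c \<odot>\<^bsub>R\<^esub> (a \<oplus>\<^bsub>R\<^esub> b) = c \<odot>\<^bsub>R\<^esub> a \<oplus>\<^bsub>R\<^esub> c \<odot>\<^bsub>R\<^esub> b) \<and>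
     (\<forall>c d a. a \<in> carrier R \<longrightarrow> (c + d) \<odot>\<^bsub>R\<^esub> a = c \<odot>\<^bsub>R\<^esub> a \<oplus>\<^bsub>R\<^esub> d \<odot>\<^bsub>R\<^esub> a) \<and>
     (\<forall>c d a. a \<in> carrier R \<longrightarrow> (c * d) \<odot>\<^bsub>R\<^esub> a = c \<odot>\<^bsub>R\<^esub> (d \<odot>\<^bsub>R\<^esub> a)) \<and>
     (\<forall>a. a \<in> carrier R \<longrightarrow> 1 \<odot>\<^bsub>R\<^esub> a = a) \<and>
     (\<forall>c a b. a \<in> carrier R \<longrightarrow> b \<in> carrier R \<longrightarrow>
          (c \<odot>\<^bsub>R\<^esub> a) \<otimes>\<^bsub>R\<^esub> b = c \<odot>\<^bsub>R\<^esub> (a \<otimes>\<^bsub>R\<^esub> b) \<and>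
          a \<otimes>\<^bsub>R\<^esub> (c \<odot>\<^bsub>R\<^esub> b) = c \<odot>\<^bsub>R\<^esub> (a \<otimes>\<^bsub>R\<^esub> b))"

definition subalg :: "('k::field, 'a) module \<Rightarrow> 'a set \<Rightarrow> bool" where
  "subalg R S \<longleftrightarrow> S \<subseteq> carrier R \<and> \<one>\<^bsub>R\<^esub> \<in> S \<and>
     (\<forall>a\<in>S. \<forall>b\<in>S. a \<oplus>\<^bsub>R\<^esub> b \<in> S \<and> a \<otimes>\<^bsub>R\<^esub> b \<in> S) \<and>
     (\<forall>c. \<forall>a\<in>S. c \<odot>\<^bsub>R\<^esub> a \<in> S)"

definition cent :: "('k, 'a) module \<Rightarrow> 'a set \<Rightarrow> 'a set" where
  "cent R X = {r \<in> carrier R. \<forall>s\<in>X. r \<otimes>\<^bsub>R\<^esub> s = s \<otimes>\<^bsub>R\<^esub> r}"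

subsection \<open>Tensor product R \<otimes>_S R, realised as the free k-vector space on R \<times> R
  modulo the subspace of balanced/bilinear relations\<close>

definition dlt :: "'b \<Rightarrow> 'b \<Rightarrow> 'k::field" where
  "dlt q p = (if p = q then 1 else 0)"

definition supp :: "('b \<Rightarrow> 'k::zero) \<Rightarrow> 'b set" where
  "supp f = {p. f p \<noteq> 0}"

definition tfree :: "('k::field, 'a) module \<Rightarrow> ('a \<times> 'a \<Rightarrow> 'k) set" where
  "tfree R = {f. finite (supp f) \<and> supp f \<subseteq> carrier R \<times> carrier R}"

inductive_set trel :: "('k::field, 'a) module \<Rightarrow> 'a set \<Rightarrow> ('a \<times> 'a \<Rightarrow> 'k) set"
  for R S where
  zero: "(\<lambda>p. 0) \<in> trel R S"
| add: "f \<in> trel R S \<Longrightarrow> g \<in> trel R S \<Longrightarrow> (\<lambda>p. f p + g p) \<in> trel R S"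
| smul: "f \<in> trel R S \<Longrightarrow> (\<lambda>p. c * f p) \<in> trel R S"
| addl: "a \<in> carrier R \<Longrightarrow> b \<in> carrier R \<Longrightarrow> c \<in> carrier R \<Longrightarrow>
     (\<lambda>p. dlt (a \<oplus>\<^bsub>R\<^esub> b, c) p - dlt (a, c) p - dlt (b, c) p) \<in> trel R S"
| addr: "a \<in> carrier R \<Longrightarrow> b \<in> carrier R \<Longrightarrow> c \<in> carrier R \<Longrightarrow>
     (\<lambda>p. dlt (a, b \<oplus>\<^bsub>R\<^esub> c) p - dlt (a, b) p - dlt (a, c) p) \<in> trel R S"
| bal: "a \<in> carrier R \<Longrightarrow> b \<in> carrier R \<Longrightarrow> s \<in> S \<Longrightarrow>
     (\<lambda>p. dlt (a \<otimes>\<^bsub>R\<^esub> s, b) p - dlt (a, s \<otimes>\<^bsub>R\<^esub> b) p) \<in> trel R S"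
| scl: "a \<in> carrier R \<Longrightarrow> b \<in> carrier R \<Longrightarrow>
     (\<lambda>p. dlt (t \<odot>\<^bsub>R\<^esub> a, b) p - t * dlt (a, b) p) \<in> trel R S"
| scr: "a \<in> carrier R \<Longrightarrow> b \<in> carrier R \<Longrightarrow>
     (\<lambda>p. dlt (a, t \<odot>\<^bsub>R\<^esub> b) p - t * dlt (a, b) p) \<in> trel R S"

definition tcls :: "('k::field, 'a) module \<Rightarrow> 'a set \<Rightarrow> ('a \<times> 'a \<Rightarrow> 'k) \<Rightarrow> ('a \<times> 'a \<Rightarrow> 'k) set" where
  "tcls R S f = {g \<in> tfree R. (\<lambda>p. g p - f p) \<in> trel R S}"

definition trep :: "'b set \<Rightarrow> 'b" where
  "trep X = (SOME f. f \<in> X)"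

text \<open>Product (a \<otimes> b)(c \<otimes> d) = a E_S(bc) \<otimes> d, extended bilinearly.\<close>
definition tmult :: "('k::field, 'a) module \<Rightarrow> 'a set \<Rightarrow> ('a \<Rightarrow> 'a) \<Rightarrow>
     ('a \<times> 'a \<Rightarrow> 'k) set \<Rightarrow> ('a \<times> 'a \<Rightarrow> 'k) set \<Rightarrow> ('a \<times> 'a \<Rightarrow> 'k) set" where
  "tmult R S E X Y = (let f = trep X; g = trep Y in
     tcls R S (\<lambda>z. \<Sum>p\<in>supp f. \<Sum>q\<in>supp g.
        f p * g q * dlt (fst p \<otimes>\<^bsub>R\<^esub> E (snd p \<otimes>\<^bsub>R\<^esub> fst q), snd q) z))"

text \<open>Basic construction R_1 = R \<otimes>_S R with unit \<Sum>_i r_i \<otimes> s_i.\<close>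
definition bc :: "('k::field, 'a) module \<Rightarrow> 'a set \<Rightarrow> ('a \<Rightarrow> 'a) \<Rightarrow> 'a list \<Rightarrow> 'a list \<Rightarrow>
     ('k, ('a \<times> 'a \<Rightarrow> 'k) set) module" where
  "bc R S E rs ss =
     \<lparr> carrier = tcls R S ` tfree R,
       monoid.mult = tmult R S E,
       one = tcls R S (\<lambda>z. \<Sum>i<length rs. dlt (rs ! i, ss ! i) z),
       zero = tcls R S (\<lambda>z. 0),
       add = (\<lambda>X Y. tcls R S (\<lambda>z. trep X z + trep Y z)),
       smult = (\<lambda>c X. tcls R S (\<lambda>z. c * trep X z)) \<rparr>"

definition bc_incl :: "('k::field, 'a) module \<Rightarrow> 'a set \<Rightarrow> 'a list \<Rightarrow> 'a list \<Rightarrow> 'a \<Rightarrow>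
     ('a \<times> 'a \<Rightarrow> 'k) set" where
  "bc_incl R S rs ss r = tcls R S (\<lambda>z. \<Sum>i<length rs. dlt (r \<otimes>\<^bsub>R\<^esub> rs ! i, ss ! i) z)"

definition bc_jones :: "('k::field, 'a) module \<Rightarrow> 'a set \<Rightarrow> ('a \<times> 'a \<Rightarrow> 'k) set" where
  "bc_jones R S = tcls R S (dlt (\<one>\<^bsub>R\<^esub>, \<one>\<^bsub>R\<^esub>))"

definition bc_E :: "('k::field, 'a) module \<Rightarrow> 'k \<Rightarrow> ('a \<times> 'a \<Rightarrow> 'k) set \<Rightarrow> 'a" where
  "bc_E R lam X = (let f = trep X in
     lam \<odot>\<^bsub>R\<^esub> (\<Oplus>\<^bsub>R\<^esub>p\<in>supp f. f p \<odot>\<^bsub>R\<^esub> (fst p \<otimes>\<^bsub>R\<^esub> snd p)))"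

text \<open>New quasi-bases \<lambda>^{-1} r_i \<otimes> 1 and 1 \<otimes> s_i.\<close>
definition bc_left :: "('k::field, 'a) module \<Rightarrow> 'a set \<Rightarrow> 'k \<Rightarrow> 'a list \<Rightarrow> ('a \<times> 'a \<Rightarrow> 'k) set list" where
  "bc_left R S lam rs = map (\<lambda>r. tcls R S (dlt (inverse lam \<odot>\<^bsub>R\<^esub> r, \<one>\<^bsub>R\<^esub>))) rs"

definition bc_right :: "('k::field, 'a) module \<Rightarrow> 'a set \<Rightarrow> 'a list \<Rightarrow> ('a \<times> 'a \<Rightarrow> 'k) set list" where
  "bc_right R S ss = map (\<lambda>s. tcls R S (dlt (\<one>\<^bsub>R\<^esub>, s))) ss"

definition free_right_basis_in :: "('k, 'b) module \<Rightarrow> 'b set \<Rightarrow> 'b set \<Rightarrow> bool" where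
  "free_right_basis_in R1 Sub X \<longleftrightarrow> (\<exists>bs. set bs \<subseteq> X \<and>
     (\<forall>x\<in>carrier R1. \<exists>!ms. length ms = length bs \<and> set ms \<subseteq> Sub \<and>
        x = (\<Oplus>\<^bsub>R1\<^esub>j\<in>{..<length bs}. bs ! j \<otimes>\<^bsub>R1\<^esub> ms ! j)))"


subsection \<open>The tower N \<subseteq> M \<subseteq> M_1 \<subseteq> M_2 for given data (M, N, E, x_i, y_i, \<lambda>)\<close>

type_synonym ('k,'a) t1 = "('a \<times> 'a \<Rightarrow> 'k) set"
type_synonym ('k,'a) t2 = "(('k,'a) t1 \<times> ('k,'a) t1 \<Rightarrow> 'k) set"

definition twM1 :: "('k::field, 'a) module \<Rightarrow> 'a set \<Rightarrow> ('a \<Rightarrow> 'a) \<Rightarrow> 'a list \<Rightarrow> 'a list \<Rightarrow> ('k, ('k,'a) t1) module" where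
  "twM1 M N E xs ys = bc M N E xs ys"
definition twi1 :: "('k::field, 'a) module \<Rightarrow> 'a set \<Rightarrow> 'a list \<Rightarrow> 'a list \<Rightarrow> 'a \<Rightarrow> ('k,'a) t1" where
  "twi1 M N xs ys = bc_incl M N xs ys"
definition twe1 :: "('k::field, 'a) module \<Rightarrow> 'a set \<Rightarrow> ('k,'a) t1" where
  "twe1 M N = bc_jones M N"
definition twEM :: "('k::field, 'a) module \<Rightarrow> 'k \<Rightarrow> ('k,'a) t1 \<Rightarrow> 'a" where
  "twEM M lam = bc_E M lam"
text \<open>M identified with its image in M_1; E_M viewed as a map into that image.\<close>
definition twM2 :: "('k::field, 'a) module \<Rightarrow> 'a set \<Rightarrow> ('a \<Rightarrow> 'a) \<Rightarrow> 'a list \<Rightarrow> 'a list \<Rightarrow> 'k \<Rightarrow> ('k, ('k,'a) t2) module" where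
  "twM2 M N E xs ys lam = bc (twM1 M N E xs ys) (twi1 M N xs ys ` carrier M)
      (twi1 M N xs ys \<circ> twEM M lam) (bc_left M N lam xs) (bc_right M N ys)"
definition twi2 :: "('k::field, 'a) module \<Rightarrow> 'a set \<Rightarrow> ('a \<Rightarrow> 'a) \<Rightarrow> 'a list \<Rightarrow> 'a list \<Rightarrow> 'k \<Rightarrow> ('k,'a) t1 \<Rightarrow> ('k,'a) t2" where
  "twi2 M N E xs ys lam = bc_incl (twM1 M N E xs ys) (twi1 M N xs ys ` carrier M) (bc_left M N lam xs) (bc_right M N ys)"
definition twe2 :: "('k::field, 'a) module \<Rightarrow> 'a set \<Rightarrow> ('a \<Rightarrow> 'a) \<Rightarrow> 'a list \<Rightarrow> 'a list \<Rightarrow> ('k,'a) t2" where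
  "twe2 M N E xs ys = bc_jones (twM1 M N E xs ys) (twi1 M N xs ys ` carrier M)"
definition twEM1 :: "('k::field, 'a) module \<Rightarrow> 'a set \<Rightarrow> ('a \<Rightarrow> 'a) \<Rightarrow> 'a list \<Rightarrow> 'a list \<Rightarrow> 'k \<Rightarrow> ('k,'a) t2 \<Rightarrow> ('k,'a) t1" where
  "twEM1 M N E xs ys lam = bc_E (twM1 M N E xs ys) lam"

definition twA where "twA M N E xs ys = cent (twM1 M N E xs ys) (twi1 M N xs ys ` N)"
definition twB where "twB M N E xs ys lam =
   cent (twM2 M N E xs ys lam) ((twi2 M N E xs ys lam \<circ> twi1 M N xs ys) ` carrier M)"
definition twF where "twF M N E xs ys lam = twEM M lam \<circ> twEM1 M N E xs ys lam"

text \<open>Counit \<epsilon>(b) = \<lambda>^{-2} F(e_2 e_1 b), with F(e_2 e_1 b) \<in> k1 identified with a scalar.\<close>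
definition counit where "counit M N E xs ys lam b = inverse lam ^ 2 *
   (THE c. twF M N E xs ys lam
      (twe2 M N E xs ys \<otimes>\<^bsub>twM2 M N E xs ys lam\<^esub> twi2 M N E xs ys lam (twe1 M N)
         \<otimes>\<^bsub>twM2 M N E xs ys lam\<^esub> b) = c \<odot>\<^bsub>M\<^esub> \<one>\<^bsub>M\<^esub>)"

definition act where "act M N E xs ys lam b x = inverse lam \<odot>\<^bsub>twM1 M N E xs ys\<^esub>
   twEM1 M N E xs ys lam (b \<otimes>\<^bsub>twM2 M N E xs ys lam\<^esub> twi2 M N E xs ys lam x
        \<otimes>\<^bsub>twM2 M N E xs ys lam\<^esub> twe2 M N E xs ys)"

end

theory Submission
  imports Defs
begin

locale kal = fixes R :: "('k::field, 'a) module" (structure)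
  assumes kalg: "kalg R"

sublocale kal \<subseteq> ring R using kalg by (simp add: kalg_def)

context kal begin

lemma smult_closed[simp,intro]: "a \<in> carrier R \<Longrightarrow> c \<odot> a \<in> carrier R"
  using kalg by (simp add: kalg_def)
lemma smult_add_r: "a \<in> carrier R \<Longrightarrow> b \<in> carrier R \<Longrightarrow> c \<odot> (a \<oplus> b) = c \<odot> a \<oplus> c \<odot> b"
  using kalg by (simp add: kalg_def)
lemma smult_add_l: "a \<in> carrier R \<Longrightarrow> (c + d) \<odot> a = c \<odot> a \<oplus> d \<odot> a"
  using kalg by (simp add: kalg_def)
lemma smult_assoc: "a \<in> carrier R \<Longrightarrow> (c * d) \<odot> a = c \<odot> (d \<odot> a)"
  using kalg by (simp add: kalg_def)
lemma smult_one[simp]: "a \<in> carrier R \<Longrightarrow> 1 \<odot> a = a"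
  using kalg by (simp add: kalg_def)
lemma smult_ml: "a \<in> carrier R \<Longrightarrow> b \<in> carrier R \<Longrightarrow> (c \<odot> a) \<otimes> b = c \<odot> (a \<otimes> b)"
  using kalg by (simp add: kalg_def)
lemma smult_mr: "a \<in> carrier R \<Longrightarrow> b \<in> carrier R \<Longrightarrow> a \<otimes> (c \<odot> b) = c \<odot> (a \<otimes> b)"
  using kalg by (simp add: kalg_def)

lemma smult_zero[simp]: "a \<in> carrier R \<Longrightarrow> (0::'k) \<odot> a = \<zero>"
proof -
  assume a: "a \<in> carrier R"
  have "(0 + 0) \<odot> a = 0 \<odot> a \<oplus> 0 \<odot> a" using smult_add_l[OF a] .
  hence "0 \<odot> a = 0 \<odot> a \<oplus> 0 \<odot> a" by simp
  thus ?thesis using a add.l_cancel_one'[of "0 \<odot> a" "0 \<odot> a"] by simp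
qed

lemma smult_rzero[simp]: "c \<odot> \<zero> = \<zero>"
proof -
  have "c \<odot> \<zero> = c \<odot> ((0::'k) \<odot> \<zero>)" by simp
  also have "\<dots> = (c * 0) \<odot> \<zero>" using smult_assoc[of \<zero> c 0] by simp
  finally show ?thesis by simp
qed

lemma smult_minus: "a \<in> carrier R \<Longrightarrow> (- c) \<odot> a = \<ominus> (c \<odot> a)"
proof -
  assume a: "a \<in> carrier R"
  have "(- c + c) \<odot> a = (- c) \<odot> a \<oplus> c \<odot> a" using smult_add_l[OF a] .
  hence "(- c) \<odot> a \<oplus> c \<odot> a = \<zero>" using a by simp
  thus ?thesis using a by (simp add: add.inv_equality)
qed

lemma smult_one_mult: "a \<in> carrier R \<Longrightarrow> c \<odot> a = (c \<odot> \<one>) \<otimes> a"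
  using smult_ml[of \<one> a c] by simp

lemma smult_finsum:
  "finite A \<Longrightarrow> f \<in> A \<rightarrow> carrier R \<Longrightarrow> c \<odot> (\<Oplus>i\<in>A. f i) = (\<Oplus>i\<in>A. c \<odot> f i)"
proof (induction A rule: finite_induct)
  case empty then show ?case by simp
next
  case (insert x A)
  then have f: "f \<in> A \<rightarrow> carrier R" "f x \<in> carrier R" by auto
  have "c \<odot> (\<Oplus>i\<in>insert x A. f i) = c \<odot> (f x \<oplus> (\<Oplus>i\<in>A. f i))"
    using insert f by (simp add: finsum_insert)
  also have "\<dots> = c \<odot> f x \<oplus> (\<Oplus>i\<in>A. c \<odot> f i)"
    using insert f by (simp add: smult_add_r finsum_closed)
  also have "\<dots> = (\<Oplus>i\<in>insert x A. c \<odot> f i)"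
    using insert f by (subst finsum_insert) auto
  finally show ?case .
qed

lemma smult_eq_imp: "\<one> \<noteq> \<zero> \<Longrightarrow> c \<odot> \<one> = d \<odot> \<one> \<Longrightarrow> c = d"
proof (rule ccontr)
  assume nz: "\<one> \<noteq> \<zero>" and eq: "c \<odot> \<one> = d \<odot> \<one>" and ne: "c \<noteq> d"
  have "(c - d) \<odot> \<one> = c \<odot> \<one> \<oplus> (- d) \<odot> \<one>"
    using smult_add_l[of \<one> c "- d"] by simp
  also have "\<dots> = \<zero>" using eq by (simp add: smult_minus r_neg)
  finally have z: "(c - d) \<odot> \<one> = \<zero>" .
  have "\<one> = (inverse (c - d) * (c - d)) \<odot> \<one>" using ne by simp
  also have "\<dots> = \<zero>" using z by (simp add: smult_assoc)
  finally show False using nz by simp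
qed

end

definition ext :: "('b \<Rightarrow> 'c \<Rightarrow> 'k::field) \<Rightarrow> ('b \<Rightarrow> 'k) \<Rightarrow> 'c \<Rightarrow> 'k" where
  "ext h f = (\<lambda>z. \<Sum>p\<in>supp f. f p * h p z)"

lemma supp_iff[simp]: "p \<in> supp f \<longleftrightarrow> f p \<noteq> 0" by (simp add: supp_def)

lemma ext_superset:
  assumes "finite D" "supp f \<subseteq> D"
  shows "ext h f z = (\<Sum>p\<in>D. f p * h p z)"
  unfolding ext_def
  by (rule sum.mono_neutral_left) (use assms in auto)

lemma supp_lin: "supp (\<lambda>p. (a::'k::field) * f p + b * g p) \<subseteq> supp f \<union> supp g"
  by (auto simp: supp_def)

lemma ext_lin:
  assumes "finite (supp f)" "finite (supp g)"
  shows "ext h (\<lambda>p. a * f p + b * g p) = (\<lambda>z. a * ext h f z + b * ext h g z)"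
proof
  fix z
  let ?D = "supp f \<union> supp g"
  have "ext h (\<lambda>p. a * f p + b * g p) z = (\<Sum>p\<in>?D. (a * f p + b * g p) * h p z)"
    by (rule ext_superset) (use assms supp_lin in auto)
  also have "\<dots> = a * (\<Sum>p\<in>?D. f p * h p z) + b * (\<Sum>p\<in>?D. g p * h p z)"
    by (simp add: sum.distrib sum_distrib_left algebra_simps)
  also have "\<dots> = a * ext h f z + b * ext h g z"
    using assms by (simp add: ext_superset[of ?D f] ext_superset[of ?D g])
  finally show "ext h (\<lambda>p. a * f p + b * g p) z = a * ext h f z + b * ext h g z" .
qed

lemma ext_add:
  assumes "finite (supp f)" "finite (supp g)"
  shows "ext h (\<lambda>p. f p + g p) = (\<lambda>z. ext h f z + ext h g z)"
  using ext_lin[OF assms, of h 1 1] by simp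

lemma ext_diff:
  assumes "finite (supp f)" "finite (supp g)"
  shows "ext h (\<lambda>p. f p - g p) = (\<lambda>z. ext h f z - ext h g z)"
  using ext_lin[OF assms, of h 1 "-1"] by simp

lemma ext_smul:
  assumes "finite (supp f)"
  shows "ext h (\<lambda>p. c * f p) = (\<lambda>z. c * ext h f z)"
  using ext_lin[OF assms assms, of h c 0] by simp

lemma supp_dlt[simp]: "supp (dlt u) = {u}"
  by (auto simp: supp_def dlt_def)

lemma ext_dlt[simp]: "ext h (dlt u) = h u"
  by (rule ext) (simp add: ext_def dlt_def)

lemma ext_zero[simp]: "ext h (\<lambda>p. 0) = (\<lambda>z. 0)"
  by (simp add: ext_def supp_def)

lemma supp_sum: "supp (\<lambda>p. \<Sum>i\<in>I. g i p) \<subseteq> (\<Union>i\<in>I. supp (g i))"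
  by (auto simp: supp_def intro: ccontr)

lemma ext_sum:
  assumes "finite I" "\<And>i. i \<in> I \<Longrightarrow> finite (supp (g i))"
  shows "ext h (\<lambda>p. \<Sum>i\<in>I. g i p) = (\<lambda>z. \<Sum>i\<in>I. ext h (g i) z)"
proof
  fix z
  let ?D = "\<Union>i\<in>I. supp (g i)"
  have fD: "finite ?D" using assms by auto
  have "ext h (\<lambda>p. \<Sum>i\<in>I. g i p) z = (\<Sum>p\<in>?D. (\<Sum>i\<in>I. g i p) * h p z)"
    by (rule ext_superset[OF fD supp_sum])
  also have "\<dots> = (\<Sum>i\<in>I. \<Sum>p\<in>?D. g i p * h p z)"
    by (simp add: sum_distrib_right sum.swap[of _ ?D])
  also have "\<dots> = (\<Sum>i\<in>I. ext h (g i) z)"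
    using assms fD by (auto intro!: sum.cong ext_superset[symmetric])
  finally show "ext h (\<lambda>p. \<Sum>i\<in>I. g i p) z = (\<Sum>i\<in>I. ext h (g i) z)" .
qed

lemma ext_hlin: "ext (\<lambda>q z. a * h1 q z + b * h2 q z) f = (\<lambda>z. a * ext h1 f z + b * ext h2 f z)"
  by (rule ext) (simp add: ext_def sum.distrib sum_distrib_left algebra_simps)

lemma ext_hcong: "(\<And>q. q \<in> supp f \<Longrightarrow> h1 q = h2 q) \<Longrightarrow> ext h1 f = ext h2 f"
  unfolding ext_def by (rule ext) (rule sum.cong, auto)

lemma ext_dlt_self: "finite (supp f) \<Longrightarrow> ext dlt f = f"
proof (rule ext)
  fix x assume fin: "finite (supp f)"
  have "ext dlt f x = (\<Sum>p\<in>supp f. if x = p then f p else 0)"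
    unfolding ext_def dlt_def by (rule sum.cong) auto
  also have "\<dots> = f x" using fin by (simp add: sum.delta)
  finally show "ext dlt f x = f x" .
qed

locale bcl = kal R for R :: "('k::field,'a) module" (structure) +
  fixes S :: "'a set" and E :: "'a \<Rightarrow> 'a" and rs ss :: "'a list" and lam :: 'k
  assumes sub: "subalg R S"
    and E_into: "\<forall>m\<in>carrier R. E m \<in> S"
    and E_add: "\<forall>a\<in>carrier R. \<forall>b\<in>carrier R. E (a \<oplus> b) = E a \<oplus> E b"
    and E_left: "\<forall>n\<in>S. \<forall>m\<in>carrier R. E (n \<otimes> m) = n \<otimes> E m"
    and E_right: "\<forall>n\<in>S. \<forall>m\<in>carrier R. E (m \<otimes> n) = E m \<otimes> n"
    and len: "length rs = length ss"
    and rs_in: "set rs \<subseteq> carrier R" and ss_in: "set ss \<subseteq> carrier R"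
    and qb1: "\<forall>m\<in>carrier R. (\<Oplus>i\<in>{..<length rs}. E (m \<otimes> rs ! i) \<otimes> ss ! i) = m"
    and qb2: "\<forall>m\<in>carrier R. (\<Oplus>i\<in>{..<length rs}. rs ! i \<otimes> E (ss ! i \<otimes> m)) = m"
    and E1: "E \<one> = \<one>"
    and lam_nz: "lam \<noteq> 0"
    and xy: "(\<Oplus>i\<in>{..<length rs}. rs ! i \<otimes> ss ! i) = inverse lam \<odot> \<one>"

context bcl begin

lemma S_sub: "S \<subseteq> carrier R" using sub by (simp add: subalg_def)
lemma S_in[simp]: "s \<in> S \<Longrightarrow> s \<in> carrier R" using S_sub by auto
lemma one_S[simp]: "\<one> \<in> S" using sub by (simp add: subalg_def)
lemma S_add: "a \<in> S \<Longrightarrow> b \<in> S \<Longrightarrow> a \<oplus> b \<in> S" using sub by (simp add: subalg_def)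
lemma S_mult: "a \<in> S \<Longrightarrow> b \<in> S \<Longrightarrow> a \<otimes> b \<in> S" using sub by (simp add: subalg_def)
lemma S_smult: "a \<in> S \<Longrightarrow> c \<odot> a \<in> S" using sub by (simp add: subalg_def)

lemma E_S[simp]: "m \<in> carrier R \<Longrightarrow> E m \<in> S" using E_into by auto
lemma E_closed[simp]: "m \<in> carrier R \<Longrightarrow> E m \<in> carrier R" by simp
lemma E_plus: "a \<in> carrier R \<Longrightarrow> b \<in> carrier R \<Longrightarrow> E (a \<oplus> b) = E a \<oplus> E b" using E_add by auto
lemma E_l: "n \<in> S \<Longrightarrow> m \<in> carrier R \<Longrightarrow> E (n \<otimes> m) = n \<otimes> E m" using E_left by auto
lemma E_r: "n \<in> S \<Longrightarrow> m \<in> carrier R \<Longrightarrow> E (m \<otimes> n) = E m \<otimes> n" using E_right by auto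

lemma E_smult: "m \<in> carrier R \<Longrightarrow> E (c \<odot> m) = c \<odot> E m"
proof -
  assume m: "m \<in> carrier R"
  have "E (c \<odot> m) = E ((c \<odot> \<one>) \<otimes> m)" using m smult_one_mult[of m c] by simp
  also have "\<dots> = (c \<odot> \<one>) \<otimes> E m" using m by (simp add: E_l S_smult)
  also have "\<dots> = c \<odot> E m" using m smult_one_mult[of "E m" c] by simp
  finally show ?thesis .
qed

lemma E_zero[simp]: "E \<zero> = \<zero>"
  using E_smult[of \<zero> 0] by simp

lemma E_finsum: "finite A \<Longrightarrow> f \<in> A \<rightarrow> carrier R \<Longrightarrow> E (\<Oplus>i\<in>A. f i) = (\<Oplus>i\<in>A. E (f i))"
proof (induction A rule: finite_induct)
  case empty then show ?case by simp
next
  case (insert x A)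
  then show ?case by (simp add: finsum_insert finsum_closed E_plus Pi_def)
qed

lemma rs_nth[simp]: "i < length rs \<Longrightarrow> rs ! i \<in> carrier R" using rs_in by auto
lemma ss_nth[simp]: "i < length rs \<Longrightarrow> ss ! i \<in> carrier R" using ss_in len by auto

abbreviation "TT \<equiv> trel R S"
abbreviation "FF \<equiv> tfree R"
abbreviation "cl \<equiv> tcls R S"

lemma FF_iff: "f \<in> FF \<longleftrightarrow> finite (supp f) \<and> supp f \<subseteq> carrier R \<times> carrier R"
  by (simp add: tfree_def)

lemma FF_fin: "f \<in> FF \<Longrightarrow> finite (supp f)" by (simp add: FF_iff)
lemma FF_supp: "f \<in> FF \<Longrightarrow> p \<in> supp f \<Longrightarrow> fst p \<in> carrier R \<and> snd p \<in> carrier R"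
  by (auto simp: FF_iff)

lemma FF_dlt[simp]: "a \<in> carrier R \<Longrightarrow> b \<in> carrier R \<Longrightarrow> dlt (a, b) \<in> FF"
  by (simp add: FF_iff)

lemma FF_lin: "f \<in> FF \<Longrightarrow> g \<in> FF \<Longrightarrow> (\<lambda>p. a * f p + b * g p) \<in> FF"
proof -
  assume f: "f \<in> FF" and g: "g \<in> FF"
  have s: "supp (\<lambda>p. a * f p + b * g p) \<subseteq> supp f \<union> supp g" by (rule supp_lin)
  have "finite (supp f \<union> supp g)" using f g FF_fin by blast
  hence "finite (supp (\<lambda>p. a * f p + b * g p))" using s finite_subset by blast
  moreover have "supp (\<lambda>p. a * f p + b * g p) \<subseteq> carrier R \<times> carrier R"
    using s f g unfolding FF_iff by blast
  ultimately show ?thesis by (simp add: FF_iff)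
qed

lemma FF_add: "f \<in> FF \<Longrightarrow> g \<in> FF \<Longrightarrow> (\<lambda>p. f p + g p) \<in> FF"
  using FF_lin[of f g 1 1] by simp
lemma FF_diff: "f \<in> FF \<Longrightarrow> g \<in> FF \<Longrightarrow> (\<lambda>p. f p - g p) \<in> FF"
  using FF_lin[of f g 1 "-1"] by simp
lemma FF_smul: "f \<in> FF \<Longrightarrow> (\<lambda>p. c * f p) \<in> FF"
  using FF_lin[of f f c 0] by simp
lemma FF_zero[simp]: "(\<lambda>p. 0) \<in> FF"
  by (simp add: FF_iff supp_def)

lemma FF_sum: "finite I \<Longrightarrow> (\<And>i. i \<in> I \<Longrightarrow> g i \<in> FF) \<Longrightarrow> (\<lambda>p. \<Sum>i\<in>I. g i p) \<in> FF"
proof (induction I rule: finite_induct)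
  case empty then show ?case by simp
next
  case (insert x I)
  then show ?case using FF_add[of "g x" "\<lambda>p. \<Sum>i\<in>I. g i p"] by simp
qed

lemma FF_ext: "finite (supp f) \<Longrightarrow> (\<And>p. p \<in> supp f \<Longrightarrow> h p \<in> FF) \<Longrightarrow> ext h f \<in> FF"
  unfolding ext_def by (rule FF_sum) (auto intro: FF_smul)

lemma TT_FF: "f \<in> TT \<Longrightarrow> f \<in> FF"
proof (induction rule: trel.induct)
  case zero then show ?case by simp
next
  case (add f g) then show ?case by (simp add: FF_add)
next
  case (smul f c) then show ?case by (simp add: FF_smul)
next
  case (addl a b c) then show ?case by (intro FF_diff FF_dlt) auto
next
  case (addr a b c) then show ?case by (intro FF_diff FF_dlt) auto
next
  case (bal a b s) then show ?case by (intro FF_diff FF_dlt) auto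
next
  case (scl a b t) then show ?case by (intro FF_diff FF_smul FF_dlt) auto
next
  case (scr a b t) then show ?case by (intro FF_diff FF_smul FF_dlt) auto
qed

lemma TT_lin: "f \<in> TT \<Longrightarrow> g \<in> TT \<Longrightarrow> (\<lambda>p. a * f p + b * g p) \<in> TT"
  using trel.add[OF trel.smul[of f R S a] trel.smul[of g R S b]] by simp
lemma TT_add: "f \<in> TT \<Longrightarrow> g \<in> TT \<Longrightarrow> (\<lambda>p. f p + g p) \<in> TT"
  by (rule trel.add)
lemma TT_diff: "f \<in> TT \<Longrightarrow> g \<in> TT \<Longrightarrow> (\<lambda>p. f p - g p) \<in> TT"
  using TT_lin[of f g 1 "-1"] by simp
lemma TT_smul: "f \<in> TT \<Longrightarrow> (\<lambda>p. c * f p) \<in> TT"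
  by (rule trel.smul)
lemma TT_zero[simp]: "(\<lambda>p. 0) \<in> TT" by (rule trel.zero)

lemma TT_sum: "finite I \<Longrightarrow> (\<And>i. i \<in> I \<Longrightarrow> g i \<in> TT) \<Longrightarrow> (\<lambda>p. \<Sum>i\<in>I. g i p) \<in> TT"
proof (induction I rule: finite_induct)
  case empty then show ?case by simp
next
  case (insert x I)
  then show ?case using TT_add[of "g x" "\<lambda>p. \<Sum>i\<in>I. g i p"] by simp
qed

lemma TT_ext: "finite (supp f) \<Longrightarrow> (\<And>p. p \<in> supp f \<Longrightarrow> h p \<in> TT) \<Longrightarrow> ext h f \<in> TT"
  unfolding ext_def by (rule TT_sum) (auto intro: TT_smul)

definition eqv where "eqv f g \<longleftrightarrow> (\<lambda>p. f p - g p) \<in> TT"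

lemma eqv_refl[simp]: "eqv f f" by (simp add: eqv_def)
lemma eqv_sym: "eqv f g \<Longrightarrow> eqv g f"
  unfolding eqv_def using TT_smul[of "\<lambda>p. f p - g p" "-1"] by simp
lemma eqv_trans: "eqv f g \<Longrightarrow> eqv g h \<Longrightarrow> eqv f h"
  unfolding eqv_def using TT_add[of "\<lambda>p. f p - g p" "\<lambda>p. g p - h p"] by simp
lemma eqv_lin: "eqv f f' \<Longrightarrow> eqv g g' \<Longrightarrow> eqv (\<lambda>p. a * f p + b * g p) (\<lambda>p. a * f' p + b * g' p)"
  unfolding eqv_def using TT_lin[of "\<lambda>p. f p - f' p" "\<lambda>p. g p - g' p" a b]
  by (simp add: algebra_simps)
lemma eqv_add: "eqv f f' \<Longrightarrow> eqv g g' \<Longrightarrow> eqv (\<lambda>p. f p + g p) (\<lambda>p. f' p + g' p)"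
  using eqv_lin[of f f' g g' 1 1] by simp
lemma eqv_smul: "eqv f f' \<Longrightarrow> eqv (\<lambda>p. c * f p) (\<lambda>p. c * f' p)"
  using eqv_lin[of f f' f f' c 0] by simp
lemma eqv_sum: "finite I \<Longrightarrow> (\<And>i. i \<in> I \<Longrightarrow> eqv (g i) (g' i)) \<Longrightarrow>
    eqv (\<lambda>p. \<Sum>i\<in>I. g i p) (\<lambda>p. \<Sum>i\<in>I. g' i p)"
  unfolding eqv_def using TT_sum[of I "\<lambda>i p. g i p - g' i p"] by (simp add: sum_subtractf)
lemma eqv_TT: "f \<in> TT \<Longrightarrow> eqv f (\<lambda>p. 0)" by (simp add: eqv_def)

lemma G_addl: "a \<in> carrier R \<Longrightarrow> b \<in> carrier R \<Longrightarrow> c \<in> carrier R \<Longrightarrow>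
  eqv (dlt (a \<oplus> b, c)) (\<lambda>p. dlt (a, c) p + dlt (b, c) p)"
  unfolding eqv_def using trel.addl[of a R b c S] by (simp add: algebra_simps)
lemma G_addr: "a \<in> carrier R \<Longrightarrow> b \<in> carrier R \<Longrightarrow> c \<in> carrier R \<Longrightarrow>
  eqv (dlt (a, b \<oplus> c)) (\<lambda>p. dlt (a, b) p + dlt (a, c) p)"
  unfolding eqv_def using trel.addr[of a R b c S] by (simp add: algebra_simps)
lemma G_bal: "a \<in> carrier R \<Longrightarrow> b \<in> carrier R \<Longrightarrow> s \<in> S \<Longrightarrow>
  eqv (dlt (a \<otimes> s, b)) (dlt (a, s \<otimes> b))"
  unfolding eqv_def using trel.bal[of a R b s S] by simp
lemma G_scl: "a \<in> carrier R \<Longrightarrow> b \<in> carrier R \<Longrightarrow>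
  eqv (dlt (t \<odot> a, b)) (\<lambda>p. t * dlt (a, b) p)"
  unfolding eqv_def using trel.scl[of a R b t S] by simp
lemma G_scr: "a \<in> carrier R \<Longrightarrow> b \<in> carrier R \<Longrightarrow>
  eqv (dlt (a, t \<odot> b)) (\<lambda>p. t * dlt (a, b) p)"
  unfolding eqv_def using trel.scr[of a R b t S] by simp

lemma G_zero1: "b \<in> carrier R \<Longrightarrow> eqv (dlt (\<zero>, b)) (\<lambda>p. 0)"
  using G_scl[of \<zero> b 0] by simp
lemma G_zero2: "a \<in> carrier R \<Longrightarrow> eqv (dlt (a, \<zero>)) (\<lambda>p. 0)"
  using G_scr[of a \<zero> 0] by simp

lemma G_sum1: "finite I \<Longrightarrow> (\<And>i. i \<in> I \<Longrightarrow> a i \<in> carrier R) \<Longrightarrow> b \<in> carrier R \<Longrightarrow>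
  eqv (dlt (\<Oplus>i\<in>I. a i, b)) (\<lambda>p. \<Sum>i\<in>I. dlt (a i, b) p)"
proof (induction I rule: finite_induct)
  case empty then show ?case by (simp add: G_zero1)
next
  case (insert x I)
  have ai: "\<And>i. i \<in> I \<Longrightarrow> a i \<in> carrier R" "a x \<in> carrier R" using insert.prems by auto
  have fs: "(\<Oplus>i\<in>I. a i) \<in> carrier R" by (rule finsum_closed) (use ai in auto)
  have e1: "dlt (\<Oplus>i\<in>insert x I. a i, b) = dlt (a x \<oplus> (\<Oplus>i\<in>I. a i), b)"
    using insert.hyps ai by (subst finsum_insert) auto
  have e2: "eqv (dlt (a x \<oplus> (\<Oplus>i\<in>I. a i), b)) (\<lambda>p. dlt (a x, b) p + dlt (\<Oplus>i\<in>I. a i, b) p)"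
    by (rule G_addl[OF ai(2) fs insert.prems(2)])
  have e3: "eqv (\<lambda>p. dlt (a x, b) p + dlt (\<Oplus>i\<in>I. a i, b) p) (\<lambda>p. dlt (a x, b) p + (\<Sum>i\<in>I. dlt (a i, b) p))"
    by (rule eqv_add[OF eqv_refl insert.IH]) (use ai insert.prems in auto)
  have e4: "(\<lambda>p. dlt (a x, b) p + (\<Sum>i\<in>I. dlt (a i, b) p)) = (\<lambda>p. \<Sum>i\<in>insert x I. dlt (a i, b) p)"
    using insert.hyps by simp
  show ?case using eqv_trans[OF e2 e3] unfolding e1 e4[symmetric] .
qed

lemma G_sum2: "finite I \<Longrightarrow> (\<And>i. i \<in> I \<Longrightarrow> b i \<in> carrier R) \<Longrightarrow> a \<in> carrier R \<Longrightarrow>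
  eqv (dlt (a, \<Oplus>i\<in>I. b i)) (\<lambda>p. \<Sum>i\<in>I. dlt (a, b i) p)"
proof (induction I rule: finite_induct)
  case empty then show ?case by (simp add: G_zero2)
next
  case (insert x I)
  have bi: "\<And>i. i \<in> I \<Longrightarrow> b i \<in> carrier R" "b x \<in> carrier R" using insert.prems by auto
  have fs: "(\<Oplus>i\<in>I. b i) \<in> carrier R" by (rule finsum_closed) (use bi in auto)
  have e1: "dlt (a, \<Oplus>i\<in>insert x I. b i) = dlt (a, b x \<oplus> (\<Oplus>i\<in>I. b i))"
    using insert.hyps bi by (subst finsum_insert) auto
  have e2: "eqv (dlt (a, b x \<oplus> (\<Oplus>i\<in>I. b i))) (\<lambda>p. dlt (a, b x) p + dlt (a, \<Oplus>i\<in>I. b i) p)"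
    by (rule G_addr[OF insert.prems(2) bi(2) fs])
  have e3: "eqv (\<lambda>p. dlt (a, b x) p + dlt (a, \<Oplus>i\<in>I. b i) p) (\<lambda>p. dlt (a, b x) p + (\<Sum>i\<in>I. dlt (a, b i) p))"
    by (rule eqv_add[OF eqv_refl insert.IH]) (use bi insert.prems in auto)
  have e4: "(\<lambda>p. dlt (a, b x) p + (\<Sum>i\<in>I. dlt (a, b i) p)) = (\<lambda>p. \<Sum>i\<in>insert x I. dlt (a, b i) p)"
    using insert.hyps by simp
  show ?case using eqv_trans[OF e2 e3] unfolding e1 e4[symmetric] .
qed

lemma ext_TT:
  assumes C1: "\<And>a b c. a \<in> carrier R \<Longrightarrow> b \<in> carrier R \<Longrightarrow> c \<in> carrier R \<Longrightarrow>
        (\<lambda>z. h (a \<oplus> b, c) z - h (a, c) z - h (b, c) z) \<in> TT"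
    and C2: "\<And>a b c. a \<in> carrier R \<Longrightarrow> b \<in> carrier R \<Longrightarrow> c \<in> carrier R \<Longrightarrow>
        (\<lambda>z. h (a, b \<oplus> c) z - h (a, b) z - h (a, c) z) \<in> TT"
    and C3: "\<And>a b s. a \<in> carrier R \<Longrightarrow> b \<in> carrier R \<Longrightarrow> s \<in> S \<Longrightarrow>
        (\<lambda>z. h (a \<otimes> s, b) z - h (a, s \<otimes> b) z) \<in> TT"
    and C4: "\<And>a b t. a \<in> carrier R \<Longrightarrow> b \<in> carrier R \<Longrightarrow>
        (\<lambda>z. h (t \<odot> a, b) z - t * h (a, b) z) \<in> TT"
    and C5: "\<And>a b t. a \<in> carrier R \<Longrightarrow> b \<in> carrier R \<Longrightarrow>
        (\<lambda>z. h (a, t \<odot> b) z - t * h (a, b) z) \<in> TT"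
  shows "f \<in> TT \<Longrightarrow> ext h f \<in> TT"
proof (induction rule: trel.induct)
  case zero then show ?case by simp
next
  case (add f g) then show ?case by (simp add: ext_add FF_fin TT_FF TT_add)
next
  case (smul f c) then show ?case by (simp add: ext_smul FF_fin TT_FF TT_smul)
next
  case (addl a b c) then show ?case
    by (simp add: ext_diff FF_fin FF_diff C1)
next
  case (addr a b c) then show ?case
    by (simp add: ext_diff FF_fin FF_diff C2)
next
  case (bal a b s) then show ?case
    by (simp add: ext_diff FF_fin C3)
next
  case (scl a b t) then show ?case
    by (simp add: ext_diff ext_smul FF_fin FF_smul C4)
next
  case (scr a b t) then show ?case
    by (simp add: ext_diff ext_smul FF_fin FF_smul C5)
qed

end

lemma ext_minus2: "(\<lambda>z. ext h1 f z - ext h2 f z) = ext (\<lambda>q z. h1 q z - h2 q z) f"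
  using ext_hlin[of 1 h1 "-1" h2 f] by simp
lemma ext_plus2: "(\<lambda>z. ext h1 f z + ext h2 f z) = ext (\<lambda>q z. h1 q z + h2 q z) f"
  using ext_hlin[of 1 h1 1 h2 f] by simp
lemma ext_smul2: "(\<lambda>z. t * ext h1 f z) = ext (\<lambda>q z. t * h1 q z) f"
  using ext_hlin[of t h1 0 h1 f] by simp

lemma supp_sum_dlt: "supp (\<lambda>z. \<Sum>q\<in>B. c q * dlt (u q) z) \<subseteq> u ` B"
proof
  fix x assume x: "x \<in> supp (\<lambda>z. \<Sum>q\<in>B. c q * dlt (u q) z)"
  show "x \<in> u ` B"
  proof (rule ccontr)
    assume "x \<notin> u ` B"
    then have h: "\<forall>q\<in>B. c q * dlt (u q) x = 0" by (auto simp: dlt_def)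
    have "(\<Sum>q\<in>B. c q * dlt (u q) x) = 0" using h by (intro sum.neutral) blast
    then show False using x by (simp add: supp_def)
  qed
qed

lemma supp_smul_dlt: "supp (\<lambda>z. c * dlt v z) \<subseteq> {v}"
  by (auto simp: supp_def dlt_def split: if_splits)

lemma fin_smul_dlt: "finite (supp (\<lambda>z. c * dlt v z))"
  using supp_smul_dlt[where c=c and v=v] finite_subset by blast

lemma fin_sum_dlt: "finite B \<Longrightarrow> finite (supp (\<lambda>z. \<Sum>q\<in>B. c q * dlt (u q) z))"
  using supp_sum_dlt[where B=B and c=c and u=u] finite_subset by blast

lemma ext_sum_dlt:
  assumes "finite B"
  shows "ext H (\<lambda>z. \<Sum>q\<in>B. c q * dlt (u q) z) = (\<lambda>z. \<Sum>q\<in>B. c q * H (u q) z)"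
proof -
  have "ext H (\<lambda>z. \<Sum>q\<in>B. c q * dlt (u q) z) = (\<lambda>z. \<Sum>q\<in>B. ext H (\<lambda>z. c q * dlt (u q) z) z)"
    by (rule ext_sum[OF assms]) (rule fin_smul_dlt)
  also have "\<dots> = (\<lambda>z. \<Sum>q\<in>B. c q * H (u q) z)"
    by (simp add: ext_smul)
  finally show ?thesis .
qed

lemma ext_sum_dlt2:
  assumes "finite A" "finite B"
  shows "ext H (\<lambda>z. \<Sum>p\<in>A. \<Sum>q\<in>B. c p q * dlt (u p q) z) = (\<lambda>z. \<Sum>p\<in>A. \<Sum>q\<in>B. c p q * H (u p q) z)"
proof -
  have "ext H (\<lambda>z. \<Sum>p\<in>A. \<Sum>q\<in>B. c p q * dlt (u p q) z) =
      (\<lambda>z. \<Sum>p\<in>A. ext H (\<lambda>z. \<Sum>q\<in>B. c p q * dlt (u p q) z) z)"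
    by (rule ext_sum[OF assms(1)]) (rule fin_sum_dlt[OF assms(2)])
  also have "\<dots> = (\<lambda>z. \<Sum>p\<in>A. \<Sum>q\<in>B. c p q * H (u p q) z)"
    by (simp add: ext_sum_dlt[OF assms(2)])
  finally show ?thesis .
qed

context bcl begin

lemma ext_eqv: "finite (supp g) \<Longrightarrow> (\<And>q. q \<in> supp g \<Longrightarrow> eqv (h1 q) (h2 q)) \<Longrightarrow> eqv (ext h1 g) (ext h2 g)"
  unfolding eqv_def ext_minus2 by (rule TT_ext) (simp_all only: eqv_def)

lemma ext_TT':
  assumes C1: "\<And>a b c. a \<in> carrier R \<Longrightarrow> b \<in> carrier R \<Longrightarrow> c \<in> carrier R \<Longrightarrow>
        eqv (h (a \<oplus> b, c)) (\<lambda>z. h (a, c) z + h (b, c) z)"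
    and C2: "\<And>a b c. a \<in> carrier R \<Longrightarrow> b \<in> carrier R \<Longrightarrow> c \<in> carrier R \<Longrightarrow>
        eqv (h (a, b \<oplus> c)) (\<lambda>z. h (a, b) z + h (a, c) z)"
    and C3: "\<And>a b s. a \<in> carrier R \<Longrightarrow> b \<in> carrier R \<Longrightarrow> s \<in> S \<Longrightarrow>
        eqv (h (a \<otimes> s, b)) (h (a, s \<otimes> b))"
    and C4: "\<And>a b t. a \<in> carrier R \<Longrightarrow> b \<in> carrier R \<Longrightarrow>
        eqv (h (t \<odot> a, b)) (\<lambda>z. t * h (a, b) z)"
    and C5: "\<And>a b t. a \<in> carrier R \<Longrightarrow> b \<in> carrier R \<Longrightarrow>
        eqv (h (a, t \<odot> b)) (\<lambda>z. t * h (a, b) z)"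
    and f: "f \<in> TT"
  shows "ext h f \<in> TT"
proof (rule ext_TT[OF _ _ _ _ _ f])
  fix a b c assume "a \<in> carrier R" "b \<in> carrier R" "c \<in> carrier R"
  then show "(\<lambda>z. h (a \<oplus> b, c) z - h (a, c) z - h (b, c) z) \<in> TT"
    using C1[of a b c] unfolding eqv_def diff_diff_eq by simp
next
  fix a b c assume "a \<in> carrier R" "b \<in> carrier R" "c \<in> carrier R"
  then show "(\<lambda>z. h (a, b \<oplus> c) z - h (a, b) z - h (a, c) z) \<in> TT"
    using C2[of a b c] unfolding eqv_def diff_diff_eq by simp
next
  fix a b s assume "a \<in> carrier R" "b \<in> carrier R" "s \<in> S"
  then show "(\<lambda>z. h (a \<otimes> s, b) z - h (a, s \<otimes> b) z) \<in> TT"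
    using C3[of a b s] unfolding eqv_def by simp
next
  fix a b t assume "a \<in> carrier R" "b \<in> carrier R"
  then show "(\<lambda>z. h (t \<odot> a, b) z - t * h (a, b) z) \<in> TT"
    using C4[of a b t] unfolding eqv_def by simp
next
  fix a b t assume "a \<in> carrier R" "b \<in> carrier R"
  then show "(\<lambda>z. h (a, t \<odot> b) z - t * h (a, b) z) \<in> TT"
    using C5[of a b t] unfolding eqv_def by simp
qed

abbreviation pm :: "'a \<times> 'a \<Rightarrow> 'a \<times> 'a \<Rightarrow> 'a \<times> 'a" where
  "pm p q \<equiv> (fst p \<otimes> E (snd p \<otimes> fst q), snd q)"

definition Phi where
  "Phi f g = (\<lambda>z. \<Sum>p\<in>supp f. \<Sum>q\<in>supp g. f p * g q * dlt (pm p q) z)"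

lemma Phi_ext1: "Phi f g = ext (\<lambda>p. ext (\<lambda>q. dlt (pm p q)) g) f"
  unfolding Phi_def ext_def by (simp add: sum_distrib_left mult.assoc)

lemma Phi_ext2: "Phi f g = ext (\<lambda>q. ext (\<lambda>p. dlt (pm p q)) f) g"
  unfolding Phi_def ext_def
  by (rule ext, subst sum.swap) (simp add: sum_distrib_left ac_simps)

lemma Phi_dlt1: "Phi (dlt p) g = ext (\<lambda>q. dlt (pm p q)) g"
  by (simp add: Phi_ext1)
lemma Phi_dlt2: "Phi f (dlt q) = ext (\<lambda>p. dlt (pm p q)) f"
  by (simp add: Phi_ext2)
lemma Phi_dlt: "Phi (dlt p) (dlt q) = dlt (pm p q)"
  by (simp add: Phi_ext1)

lemma pm_in: "fst p \<in> carrier R \<Longrightarrow> snd p \<in> carrier R \<Longrightarrow> fst q \<in> carrier R \<Longrightarrow> snd q \<in> carrier R \<Longrightarrow>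
   dlt (pm p q) \<in> FF"
  by simp

lemma Phi_FF: "f \<in> FF \<Longrightarrow> g \<in> FF \<Longrightarrow> Phi f g \<in> FF"
  unfolding Phi_ext1
proof (intro FF_ext FF_fin)
  fix p q assume f: "f \<in> FF" and g: "g \<in> FF" and p: "p \<in> supp f" and q: "q \<in> supp g"
  then show "dlt (pm p q) \<in> FF" using FF_supp[OF f p] FF_supp[OF g q] by simp
qed

lemma Phi_lin1: "finite (supp f) \<Longrightarrow> finite (supp f') \<Longrightarrow>
   Phi (\<lambda>p. a * f p + b * f' p) g = (\<lambda>z. a * Phi f g z + b * Phi f' g z)"
  unfolding Phi_ext1 by (rule ext_lin)
lemma Phi_lin2: "finite (supp g) \<Longrightarrow> finite (supp g') \<Longrightarrow>
   Phi f (\<lambda>p. a * g p + b * g' p) = (\<lambda>z. a * Phi f g z + b * Phi f g' z)"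
  unfolding Phi_ext2 by (rule ext_lin)

lemma Phi_TT1: assumes f: "f \<in> TT" and g: "g \<in> FF" shows "Phi f g \<in> TT"
  unfolding Phi_ext1
proof (rule ext_TT'[OF _ _ _ _ _ f])
  fix a b c assume abc: "a \<in> carrier R" "b \<in> carrier R" "c \<in> carrier R"
  show "eqv (ext (\<lambda>q. dlt (pm (a \<oplus> b, c) q)) g)
          (\<lambda>z. ext (\<lambda>q. dlt (pm (a, c) q)) g z + ext (\<lambda>q. dlt (pm (b, c) q)) g z)"
    unfolding ext_plus2
  proof (rule ext_eqv[OF FF_fin[OF g]])
    fix q assume "q \<in> supp g"
    then have q: "fst q \<in> carrier R" "snd q \<in> carrier R" using g FF_supp by auto
    have e: "(a \<oplus> b) \<otimes> E (c \<otimes> fst q) = a \<otimes> E (c \<otimes> fst q) \<oplus> b \<otimes> E (c \<otimes> fst q)"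
      using abc q by (simp add: l_distr)
    show "eqv (dlt (pm (a \<oplus> b, c) q)) (\<lambda>z. dlt (pm (a, c) q) z + dlt (pm (b, c) q) z)"
      using G_addl[of "a \<otimes> E (c \<otimes> fst q)" "b \<otimes> E (c \<otimes> fst q)" "snd q"] abc q e by simp
  qed
next
  fix a b c assume abc: "a \<in> carrier R" "b \<in> carrier R" "c \<in> carrier R"
  show "eqv (ext (\<lambda>q. dlt (pm (a, b \<oplus> c) q)) g)
          (\<lambda>z. ext (\<lambda>q. dlt (pm (a, b) q)) g z + ext (\<lambda>q. dlt (pm (a, c) q)) g z)"
    unfolding ext_plus2
  proof (rule ext_eqv[OF FF_fin[OF g]])
    fix q assume "q \<in> supp g"
    then have q: "fst q \<in> carrier R" "snd q \<in> carrier R" using g FF_supp by auto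
    have e: "a \<otimes> E ((b \<oplus> c) \<otimes> fst q) = a \<otimes> E (b \<otimes> fst q) \<oplus> a \<otimes> E (c \<otimes> fst q)"
      using abc q by (simp add: l_distr r_distr E_plus)
    show "eqv (dlt (pm (a, b \<oplus> c) q)) (\<lambda>z. dlt (pm (a, b) q) z + dlt (pm (a, c) q) z)"
      using G_addl[of "a \<otimes> E (b \<otimes> fst q)" "a \<otimes> E (c \<otimes> fst q)" "snd q"] abc q e by simp
  qed
next
  fix a b s assume abs: "a \<in> carrier R" "b \<in> carrier R" "s \<in> S"
  show "eqv (ext (\<lambda>q. dlt (pm (a \<otimes> s, b) q)) g) (ext (\<lambda>q. dlt (pm (a, s \<otimes> b) q)) g)"
  proof (rule ext_eqv[OF FF_fin[OF g]])
    fix q assume "q \<in> supp g"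
    then have q: "fst q \<in> carrier R" "snd q \<in> carrier R" using g FF_supp by auto
    have "a \<otimes> s \<otimes> E (b \<otimes> fst q) = a \<otimes> E (s \<otimes> b \<otimes> fst q)"
      using abs q by (simp add: m_assoc E_l)
    then show "eqv (dlt (pm (a \<otimes> s, b) q)) (dlt (pm (a, s \<otimes> b) q))" by simp
  qed
next
  fix a b t assume ab: "a \<in> carrier R" "b \<in> carrier R"
  show "eqv (ext (\<lambda>q. dlt (pm (t \<odot> a, b) q)) g) (\<lambda>z. t * ext (\<lambda>q. dlt (pm (a, b) q)) g z)"
    unfolding ext_smul2
  proof (rule ext_eqv[OF FF_fin[OF g]])
    fix q assume "q \<in> supp g"
    then have q: "fst q \<in> carrier R" "snd q \<in> carrier R" using g FF_supp by auto
    have e: "(t \<odot> a) \<otimes> E (b \<otimes> fst q) = t \<odot> (a \<otimes> E (b \<otimes> fst q))"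
      using ab q by (simp add: smult_ml)
    show "eqv (dlt (pm (t \<odot> a, b) q)) (\<lambda>z. t * dlt (pm (a, b) q) z)"
      using G_scl[of "a \<otimes> E (b \<otimes> fst q)" "snd q" t] ab q e by simp
  qed
next
  fix a b t assume ab: "a \<in> carrier R" "b \<in> carrier R"
  show "eqv (ext (\<lambda>q. dlt (pm (a, t \<odot> b) q)) g) (\<lambda>z. t * ext (\<lambda>q. dlt (pm (a, b) q)) g z)"
    unfolding ext_smul2
  proof (rule ext_eqv[OF FF_fin[OF g]])
    fix q assume "q \<in> supp g"
    then have q: "fst q \<in> carrier R" "snd q \<in> carrier R" using g FF_supp by auto
    have e: "a \<otimes> E ((t \<odot> b) \<otimes> fst q) = t \<odot> (a \<otimes> E (b \<otimes> fst q))"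
      using ab q by (simp add: smult_ml smult_mr E_smult)
    show "eqv (dlt (pm (a, t \<odot> b) q)) (\<lambda>z. t * dlt (pm (a, b) q) z)"
      using G_scl[of "a \<otimes> E (b \<otimes> fst q)" "snd q" t] ab q e by simp
  qed
qed

lemma Phi_TT2: assumes f: "f \<in> FF" and g: "g \<in> TT" shows "Phi f g \<in> TT"
  unfolding Phi_ext2
proof (rule ext_TT'[OF _ _ _ _ _ g])
  fix a b c assume abc: "a \<in> carrier R" "b \<in> carrier R" "c \<in> carrier R"
  show "eqv (ext (\<lambda>p. dlt (pm p (a \<oplus> b, c))) f)
          (\<lambda>z. ext (\<lambda>p. dlt (pm p (a, c))) f z + ext (\<lambda>p. dlt (pm p (b, c))) f z)"
    unfolding ext_plus2
  proof (rule ext_eqv[OF FF_fin[OF f]])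
    fix p assume "p \<in> supp f"
    then have p: "fst p \<in> carrier R" "snd p \<in> carrier R" using f FF_supp by auto
    have e: "fst p \<otimes> E (snd p \<otimes> (a \<oplus> b)) = fst p \<otimes> E (snd p \<otimes> a) \<oplus> fst p \<otimes> E (snd p \<otimes> b)"
      using abc p by (simp add: r_distr E_plus)
    show "eqv (dlt (pm p (a \<oplus> b, c))) (\<lambda>z. dlt (pm p (a, c)) z + dlt (pm p (b, c)) z)"
      using G_addl[of "fst p \<otimes> E (snd p \<otimes> a)" "fst p \<otimes> E (snd p \<otimes> b)" c] abc p e by simp
  qed
next
  fix a b c assume abc: "a \<in> carrier R" "b \<in> carrier R" "c \<in> carrier R"
  show "eqv (ext (\<lambda>p. dlt (pm p (a, b \<oplus> c))) f)
          (\<lambda>z. ext (\<lambda>p. dlt (pm p (a, b))) f z + ext (\<lambda>p. dlt (pm p (a, c))) f z)"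
    unfolding ext_plus2
  proof (rule ext_eqv[OF FF_fin[OF f]])
    fix p assume "p \<in> supp f"
    then have p: "fst p \<in> carrier R" "snd p \<in> carrier R" using f FF_supp by auto
    show "eqv (dlt (pm p (a, b \<oplus> c))) (\<lambda>z. dlt (pm p (a, b)) z + dlt (pm p (a, c)) z)"
      using G_addr[of "fst p \<otimes> E (snd p \<otimes> a)" b c] abc p by simp
  qed
next
  fix a b s assume abs: "a \<in> carrier R" "b \<in> carrier R" "s \<in> S"
  show "eqv (ext (\<lambda>p. dlt (pm p (a \<otimes> s, b))) f) (ext (\<lambda>p. dlt (pm p (a, s \<otimes> b))) f)"
  proof (rule ext_eqv[OF FF_fin[OF f]])
    fix p assume "p \<in> supp f"
    then have p: "fst p \<in> carrier R" "snd p \<in> carrier R" using f FF_supp by auto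
    have "fst p \<otimes> E (snd p \<otimes> (a \<otimes> s)) = fst p \<otimes> E (snd p \<otimes> a) \<otimes> s"
      using abs p by (simp add: m_assoc[symmetric] E_r)
    then show "eqv (dlt (pm p (a \<otimes> s, b))) (dlt (pm p (a, s \<otimes> b)))"
      using abs p G_bal[of "fst p \<otimes> E (snd p \<otimes> a)" b s] by simp
  qed
next
  fix a b t assume ab: "a \<in> carrier R" "b \<in> carrier R"
  show "eqv (ext (\<lambda>p. dlt (pm p (t \<odot> a, b))) f) (\<lambda>z. t * ext (\<lambda>p. dlt (pm p (a, b))) f z)"
    unfolding ext_smul2
  proof (rule ext_eqv[OF FF_fin[OF f]])
    fix p assume "p \<in> supp f"
    then have p: "fst p \<in> carrier R" "snd p \<in> carrier R" using f FF_supp by auto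
    have e: "fst p \<otimes> E (snd p \<otimes> (t \<odot> a)) = t \<odot> (fst p \<otimes> E (snd p \<otimes> a))"
      using ab p by (simp add: smult_mr E_smult)
    show "eqv (dlt (pm p (t \<odot> a, b))) (\<lambda>z. t * dlt (pm p (a, b)) z)"
      using G_scl[of "fst p \<otimes> E (snd p \<otimes> a)" b t] ab p e by simp
  qed
next
  fix a b t assume ab: "a \<in> carrier R" "b \<in> carrier R"
  show "eqv (ext (\<lambda>p. dlt (pm p (a, t \<odot> b))) f) (\<lambda>z. t * ext (\<lambda>p. dlt (pm p (a, b))) f z)"
    unfolding ext_smul2
  proof (rule ext_eqv[OF FF_fin[OF f]])
    fix p assume "p \<in> supp f"
    then have p: "fst p \<in> carrier R" "snd p \<in> carrier R" using f FF_supp by auto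
    show "eqv (dlt (pm p (a, t \<odot> b))) (\<lambda>z. t * dlt (pm p (a, b)) z)"
      using G_scr[of "fst p \<otimes> E (snd p \<otimes> a)" b t] ab p by simp
  qed
qed

lemma Phi_eqv: "f \<in> FF \<Longrightarrow> f' \<in> FF \<Longrightarrow> g \<in> FF \<Longrightarrow> g' \<in> FF \<Longrightarrow> eqv f f' \<Longrightarrow> eqv g g' \<Longrightarrow>
   eqv (Phi f g) (Phi f' g')"
proof -
  assume f: "f \<in> FF" and f': "f' \<in> FF" and g: "g \<in> FF" and g': "g' \<in> FF"
    and ef: "eqv f f'" and eg: "eqv g g'"
  have "(\<lambda>z. Phi f g z - Phi f' g z) = Phi (\<lambda>p. f p - f' p) g"
    using Phi_lin1[OF FF_fin[OF f] FF_fin[OF f'], of 1 "-1" g] by simp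
  moreover have "Phi (\<lambda>p. f p - f' p) g \<in> TT" using ef g Phi_TT1 by (simp add: eqv_def)
  ultimately have 1: "eqv (Phi f g) (Phi f' g)" by (simp add: eqv_def)
  have "(\<lambda>z. Phi f' g z - Phi f' g' z) = Phi f' (\<lambda>p. g p - g' p)"
    using Phi_lin2[OF FF_fin[OF g] FF_fin[OF g'], of f' 1 "-1"] by simp
  moreover have "Phi f' (\<lambda>p. g p - g' p) \<in> TT" using eg f' Phi_TT2 by (simp add: eqv_def)
  ultimately have 2: "eqv (Phi f' g) (Phi f' g')" by (simp add: eqv_def)
  show ?thesis using eqv_trans[OF 1 2] .
qed

end

lemma sum_swap3: "(\<Sum>q\<in>B. \<Sum>r\<in>C. \<Sum>p\<in>A. X p q r) = (\<Sum>p\<in>A. \<Sum>q\<in>B. \<Sum>r\<in>C. X p q r)"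
proof -
  have "(\<Sum>q\<in>B. \<Sum>r\<in>C. \<Sum>p\<in>A. X p q r) = (\<Sum>q\<in>B. \<Sum>p\<in>A. \<Sum>r\<in>C. X p q r)"
    by (rule sum.cong[OF refl], rule sum.swap)
  also have "\<dots> = (\<Sum>p\<in>A. \<Sum>q\<in>B. \<Sum>r\<in>C. X p q r)" by (rule sum.swap)
  finally show ?thesis .
qed

context bcl begin

declare supp_iff[simp del]

abbreviation "R1 \<equiv> bc R S E rs ss"
definition U where "U = (\<lambda>z. \<Sum>i<length rs. dlt (rs ! i, ss ! i) z)"

lemma U_FF: "U \<in> FF" unfolding U_def by (rule FF_sum) auto

lemma cl_alt: "cl f = {h \<in> FF. eqv h f}" by (simp add: tcls_def eqv_def)
lemma cl_self: "f \<in> FF \<Longrightarrow> f \<in> cl f" by (simp add: cl_alt)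
lemma cl_eq: "f \<in> FF \<Longrightarrow> g \<in> FF \<Longrightarrow> cl f = cl g \<longleftrightarrow> eqv f g"
proof
  assume f: "f \<in> FF" and g: "g \<in> FF" and "cl f = cl g"
  then have "f \<in> cl g" using cl_self by auto
  then show "eqv f g" by (simp add: cl_alt)
next
  assume f: "f \<in> FF" and g: "g \<in> FF" and e: "eqv f g"
  show "cl f = cl g" unfolding cl_alt using e eqv_trans eqv_sym by blast
qed
lemma cl_eqI: "f \<in> FF \<Longrightarrow> g \<in> FF \<Longrightarrow> eqv f g \<Longrightarrow> cl f = cl g" using cl_eq by blast
lemma trep_cl: "f \<in> FF \<Longrightarrow> trep (cl f) \<in> FF \<and> eqv (trep (cl f)) f"
proof -
  assume f: "f \<in> FF"
  have "trep (cl f) \<in> cl f" unfolding trep_def by (rule someI[of _ f]) (rule cl_self[OF f])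
  then show ?thesis by (simp add: cl_alt)
qed

lemma carrier_R1: "carrier R1 = cl ` FF" by (simp add: bc_def)
lemma R1E: "X \<in> carrier R1 \<Longrightarrow> (\<And>f. f \<in> FF \<Longrightarrow> X = cl f \<Longrightarrow> P) \<Longrightarrow> P" by (auto simp: carrier_R1)
lemma cl_in[simp]: "f \<in> FF \<Longrightarrow> cl f \<in> carrier R1" by (simp add: carrier_R1)

lemma add_R1: "f \<in> FF \<Longrightarrow> g \<in> FF \<Longrightarrow> cl f \<oplus>\<^bsub>R1\<^esub> cl g = cl (\<lambda>p. f p + g p)"
proof -
  assume f: "f \<in> FF" and g: "g \<in> FF"
  have "cl f \<oplus>\<^bsub>R1\<^esub> cl g = cl (\<lambda>z. trep (cl f) z + trep (cl g) z)" by (simp add: bc_def)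
  also have "\<dots> = cl (\<lambda>p. f p + g p)"
    by (rule cl_eqI) (use trep_cl[OF f] trep_cl[OF g] f g in \<open>auto intro: FF_add eqv_add\<close>)
  finally show ?thesis .
qed

lemma smult_R1: "f \<in> FF \<Longrightarrow> c \<odot>\<^bsub>R1\<^esub> cl f = cl (\<lambda>p. c * f p)"
proof -
  assume f: "f \<in> FF"
  have "c \<odot>\<^bsub>R1\<^esub> cl f = cl (\<lambda>z. c * trep (cl f) z)" by (simp add: bc_def)
  also have "\<dots> = cl (\<lambda>p. c * f p)"
    by (rule cl_eqI) (use trep_cl[OF f] f in \<open>auto intro: FF_smul eqv_smul\<close>)
  finally show ?thesis .
qed

lemma mult_R1: "f \<in> FF \<Longrightarrow> g \<in> FF \<Longrightarrow> cl f \<otimes>\<^bsub>R1\<^esub> cl g = cl (Phi f g)"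
proof -
  assume f: "f \<in> FF" and g: "g \<in> FF"
  have "cl f \<otimes>\<^bsub>R1\<^esub> cl g = cl (Phi (trep (cl f)) (trep (cl g)))"
    by (simp add: bc_def tmult_def Phi_def Let_def)
  also have "\<dots> = cl (Phi f g)"
    by (rule cl_eqI) (use trep_cl[OF f] trep_cl[OF g] f g in \<open>auto intro: Phi_FF Phi_eqv\<close>)
  finally show ?thesis .
qed

lemma zero_R1: "\<zero>\<^bsub>R1\<^esub> = cl (\<lambda>p. 0)" by (simp add: bc_def)
lemma one_R1: "\<one>\<^bsub>R1\<^esub> = cl U" by (simp add: bc_def U_def)

lemma Phi_assoc:
  assumes f: "f \<in> FF" and g: "g \<in> FF" and h: "h \<in> FF"
  shows "Phi (Phi f g) h = Phi f (Phi g h)"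
proof
  fix z
  have fin: "finite (supp f)" "finite (supp g)" "finite (supp h)" using f g h FF_fin by auto
  have L1: "Phi (Phi f g) h = ext (\<lambda>p. Phi (dlt p) h) (Phi f g)"
    by (simp only: Phi_ext1[of "Phi f g" h] Phi_dlt1)
  have L2: "Phi f g = (\<lambda>z. \<Sum>p\<in>supp f. \<Sum>q\<in>supp g. (f p * g q) * dlt (pm p q) z)"
    by (simp add: Phi_def)
  have "Phi (Phi f g) h z = ext (\<lambda>p. Phi (dlt p) h) (Phi f g) z" using L1 by simp
  also have "\<dots> = ext (\<lambda>p. Phi (dlt p) h) (\<lambda>z. \<Sum>p\<in>supp f. \<Sum>q\<in>supp g. (f p * g q) * dlt (pm p q) z) z"
    by (simp only: L2)
  also have "\<dots> = (\<Sum>p\<in>supp f. \<Sum>q\<in>supp g. (f p * g q) * Phi (dlt (pm p q)) h z)"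
    by (simp only: ext_sum_dlt2[OF fin(1,2)])
  finally have L: "Phi (Phi f g) h z = (\<Sum>p\<in>supp f. \<Sum>q\<in>supp g. (f p * g q) * Phi (dlt (pm p q)) h z)" .
  have R1: "Phi f (Phi g h) = ext (\<lambda>q. Phi f (dlt q)) (Phi g h)"
    by (simp only: Phi_ext2[of f "Phi g h"] Phi_dlt2)
  have R2: "Phi g h = (\<lambda>z. \<Sum>q\<in>supp g. \<Sum>r\<in>supp h. (g q * h r) * dlt (pm q r) z)"
    by (simp add: Phi_def)
  have "Phi f (Phi g h) z = ext (\<lambda>q. Phi f (dlt q)) (Phi g h) z" using R1 by simp
  also have "\<dots> = ext (\<lambda>q. Phi f (dlt q)) (\<lambda>z. \<Sum>q\<in>supp g. \<Sum>r\<in>supp h. (g q * h r) * dlt (pm q r) z) z"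
    by (simp only: R2)
  also have "\<dots> = (\<Sum>q\<in>supp g. \<Sum>r\<in>supp h. (g q * h r) * Phi f (dlt (pm q r)) z)"
    by (simp only: ext_sum_dlt2[OF fin(2,3)])
  finally have R: "Phi f (Phi g h) z = (\<Sum>q\<in>supp g. \<Sum>r\<in>supp h. (g q * h r) * Phi f (dlt (pm q r)) z)" .
  have pmass: "pm (pm p q) r = pm p (pm q r)" if "p \<in> supp f" "q \<in> supp g" "r \<in> supp h" for p q r
  proof -
    have p: "fst p \<in> carrier R" "snd p \<in> carrier R" using FF_supp[OF f that(1)] by auto
    have q: "fst q \<in> carrier R" "snd q \<in> carrier R" using FF_supp[OF g that(2)] by auto
    have r: "fst r \<in> carrier R" "snd r \<in> carrier R" using FF_supp[OF h that(3)] by auto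
    have "E (snd p \<otimes> (fst q \<otimes> E (snd q \<otimes> fst r))) = E (snd p \<otimes> fst q) \<otimes> E (snd q \<otimes> fst r)"
      using p q r by (simp add: m_assoc[symmetric] E_r)
    then show ?thesis using p q r by (simp add: m_assoc)
  qed
  have "Phi (Phi f g) h z = (\<Sum>p\<in>supp f. \<Sum>q\<in>supp g. \<Sum>r\<in>supp h. f p * g q * h r * dlt (pm (pm p q) r) z)"
    unfolding L by (simp add: Phi_dlt1 ext_def sum_distrib_left mult.assoc)
  also have "\<dots> = (\<Sum>p\<in>supp f. \<Sum>q\<in>supp g. \<Sum>r\<in>supp h. f p * g q * h r * dlt (pm p (pm q r)) z)"
    by (intro sum.cong refl) (simp only: pmass)
  also have "\<dots> = (\<Sum>q\<in>supp g. \<Sum>r\<in>supp h. \<Sum>p\<in>supp f. f p * g q * h r * dlt (pm p (pm q r)) z)"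
    by (rule sum_swap3[symmetric])
  also have "\<dots> = Phi f (Phi g h) z"
    unfolding R by (simp add: Phi_dlt2 ext_def sum_distrib_left ac_simps)
  finally show "Phi (Phi f g) h z = Phi f (Phi g h) z" .
qed

lemma ext_U: "ext H U = (\<lambda>z. \<Sum>i<length rs. H (rs ! i, ss ! i) z)"
  unfolding U_def by (subst ext_sum) auto

lemma Phi_U_l: assumes g: "g \<in> FF" shows "eqv (Phi U g) g"
proof -
  have "Phi U g = ext (\<lambda>q. Phi U (dlt q)) g" by (simp only: Phi_ext2[of U g] Phi_dlt2)
  moreover have "eqv (ext (\<lambda>q. Phi U (dlt q)) g) (ext dlt g)"
  proof (rule ext_eqv[OF FF_fin[OF g]])
    fix q assume "q \<in> supp g"
    then have q: "fst q \<in> carrier R" "snd q \<in> carrier R" using g FF_supp by auto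
    have 1: "Phi U (dlt q) = (\<lambda>z. \<Sum>i<length rs. dlt (rs ! i \<otimes> E (ss ! i \<otimes> fst q), snd q) z)"
      by (simp add: Phi_dlt2 ext_U)
    have 2: "eqv (dlt (\<Oplus>i\<in>{..<length rs}. rs ! i \<otimes> E (ss ! i \<otimes> fst q), snd q))
        (\<lambda>z. \<Sum>i<length rs. dlt (rs ! i \<otimes> E (ss ! i \<otimes> fst q), snd q) z)"
      by (rule G_sum1) (use q in auto)
    have 3: "(\<Oplus>i\<in>{..<length rs}. rs ! i \<otimes> E (ss ! i \<otimes> fst q)) = fst q"
      using qb2 q by auto
    have 5: "eqv (dlt (fst q, snd q)) (\<lambda>z. \<Sum>i<length rs. dlt (rs ! i \<otimes> E (ss ! i \<otimes> fst q), snd q) z)"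
      using 2 unfolding 3 .
    show "eqv (Phi U (dlt q)) (dlt q)" using eqv_sym[OF 5] unfolding 1 by simp
  qed
  ultimately show ?thesis using ext_dlt_self[OF FF_fin[OF g]] by simp
qed

lemma Phi_U_r: assumes g: "g \<in> FF" shows "eqv (Phi g U) g"
proof -
  have "Phi g U = ext (\<lambda>p. Phi (dlt p) U) g" by (simp only: Phi_ext1[of g U] Phi_dlt1)
  moreover have "eqv (ext (\<lambda>p. Phi (dlt p) U) g) (ext dlt g)"
  proof (rule ext_eqv[OF FF_fin[OF g]])
    fix p assume "p \<in> supp g"
    then have p: "fst p \<in> carrier R" "snd p \<in> carrier R" using g FF_supp by auto
    have 1: "Phi (dlt p) U = (\<lambda>z. \<Sum>i<length rs. dlt (fst p \<otimes> E (snd p \<otimes> rs ! i), ss ! i) z)"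
      by (simp add: Phi_dlt1 ext_U)
    have 2: "eqv (\<lambda>z. \<Sum>i<length rs. dlt (fst p \<otimes> E (snd p \<otimes> rs ! i), ss ! i) z)
               (\<lambda>z. \<Sum>i<length rs. dlt (fst p, E (snd p \<otimes> rs ! i) \<otimes> ss ! i) z)"
      by (rule eqv_sum) (use p in \<open>auto intro: G_bal\<close>)
    have 3: "eqv (dlt (fst p, \<Oplus>i\<in>{..<length rs}. E (snd p \<otimes> rs ! i) \<otimes> ss ! i))
        (\<lambda>z. \<Sum>i<length rs. dlt (fst p, E (snd p \<otimes> rs ! i) \<otimes> ss ! i) z)"
      by (rule G_sum2) (use p in auto)
    have 4: "(\<Oplus>i\<in>{..<length rs}. E (snd p \<otimes> rs ! i) \<otimes> ss ! i) = snd p"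
      using qb1 p by auto
    show "eqv (Phi (dlt p) U) (dlt p)"
      using eqv_trans[OF 2 eqv_sym[OF 3]] unfolding 1 4 by simp
  qed
  ultimately show ?thesis using ext_dlt_self[OF FF_fin[OF g]] by simp
qed

lemma ring_R1: "ring R1"
proof (rule ringI)
  show "abelian_group R1"
  proof (rule abelian_groupI)
    fix x y assume "x \<in> carrier R1" "y \<in> carrier R1"
    then show "x \<oplus>\<^bsub>R1\<^esub> y \<in> carrier R1"
      by (auto elim!: R1E simp: add_R1 FF_add)
  next
    show "\<zero>\<^bsub>R1\<^esub> \<in> carrier R1" by (simp add: zero_R1)
  next
    fix x y z assume "x \<in> carrier R1" "y \<in> carrier R1" "z \<in> carrier R1"
    then show "x \<oplus>\<^bsub>R1\<^esub> y \<oplus>\<^bsub>R1\<^esub> z = x \<oplus>\<^bsub>R1\<^esub> (y \<oplus>\<^bsub>R1\<^esub> z)"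
      by (auto elim!: R1E simp: add_R1 FF_add add.assoc)
  next
    fix x y assume "x \<in> carrier R1" "y \<in> carrier R1"
    then show "x \<oplus>\<^bsub>R1\<^esub> y = y \<oplus>\<^bsub>R1\<^esub> x"
      by (auto elim!: R1E simp: add_R1 add.commute)
  next
    fix x assume "x \<in> carrier R1"
    then show "\<zero>\<^bsub>R1\<^esub> \<oplus>\<^bsub>R1\<^esub> x = x"
      by (auto elim!: R1E simp: add_R1 zero_R1)
  next
    fix x assume "x \<in> carrier R1"
    then obtain f where f: "f \<in> FF" "x = cl f" by (rule R1E)
    have m: "(\<lambda>p. - f p) \<in> FF" using FF_smul[OF f(1), of "-1"] by simp
    have "cl (\<lambda>p. - f p) \<oplus>\<^bsub>R1\<^esub> x = \<zero>\<^bsub>R1\<^esub>" using f m by (simp add: add_R1 zero_R1)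
    then show "\<exists>y\<in>carrier R1. y \<oplus>\<^bsub>R1\<^esub> x = \<zero>\<^bsub>R1\<^esub>" using m by (intro bexI[of _ "cl (\<lambda>p. - f p)"]) auto
  qed
next
  show "monoid R1"
  proof (rule monoidI)
    fix x y assume "x \<in> carrier R1" "y \<in> carrier R1"
    then show "x \<otimes>\<^bsub>R1\<^esub> y \<in> carrier R1"
      by (auto elim!: R1E simp: mult_R1 Phi_FF)
  next
    show "\<one>\<^bsub>R1\<^esub> \<in> carrier R1" by (simp add: one_R1 U_FF)
  next
    fix x y z assume "x \<in> carrier R1" "y \<in> carrier R1" "z \<in> carrier R1"
    then show "x \<otimes>\<^bsub>R1\<^esub> y \<otimes>\<^bsub>R1\<^esub> z = x \<otimes>\<^bsub>R1\<^esub> (y \<otimes>\<^bsub>R1\<^esub> z)"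
      by (auto elim!: R1E simp: mult_R1 Phi_FF Phi_assoc)
  next
    fix x assume "x \<in> carrier R1"
    then obtain f where f: "f \<in> FF" "x = cl f" by (rule R1E)
    show "\<one>\<^bsub>R1\<^esub> \<otimes>\<^bsub>R1\<^esub> x = x"
      using f by (simp add: mult_R1 one_R1 U_FF) (intro cl_eqI Phi_FF U_FF Phi_U_l f(1))
  next
    fix x assume "x \<in> carrier R1"
    then obtain f where f: "f \<in> FF" "x = cl f" by (rule R1E)
    show "x \<otimes>\<^bsub>R1\<^esub> \<one>\<^bsub>R1\<^esub> = x"
      using f by (simp add: mult_R1 one_R1 U_FF) (intro cl_eqI Phi_FF U_FF Phi_U_r f(1))
  qed
next
  fix x y z assume "x \<in> carrier R1" "y \<in> carrier R1" "z \<in> carrier R1"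
  then show "(x \<oplus>\<^bsub>R1\<^esub> y) \<otimes>\<^bsub>R1\<^esub> z = x \<otimes>\<^bsub>R1\<^esub> z \<oplus>\<^bsub>R1\<^esub> y \<otimes>\<^bsub>R1\<^esub> z"
    by (auto elim!: R1E simp: mult_R1 add_R1 FF_add Phi_FF Phi_lin1[of _ _ 1 1, simplified] FF_fin)
next
  fix x y z assume "x \<in> carrier R1" "y \<in> carrier R1" "z \<in> carrier R1"
  then show "z \<otimes>\<^bsub>R1\<^esub> (x \<oplus>\<^bsub>R1\<^esub> y) = z \<otimes>\<^bsub>R1\<^esub> x \<oplus>\<^bsub>R1\<^esub> z \<otimes>\<^bsub>R1\<^esub> y"
    by (auto elim!: R1E simp: mult_R1 add_R1 FF_add Phi_FF Phi_lin2[of _ _ _ 1 1, simplified] FF_fin)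
qed

lemma Phi_smul1: "f \<in> FF \<Longrightarrow> Phi (\<lambda>p. c * f p) g = (\<lambda>z. c * Phi f g z)"
  using Phi_lin1[of f f c 0 g] FF_fin by simp
lemma Phi_smul2: "g \<in> FF \<Longrightarrow> Phi f (\<lambda>p. c * g p) = (\<lambda>z. c * Phi f g z)"
  using Phi_lin2[of g g f c 0] FF_fin by simp

lemma kalg_R1: "kalg R1"
  unfolding kalg_def
proof (intro conjI allI impI)
  show "ring R1" by (rule ring_R1)
next
  fix c a assume "a \<in> carrier R1"
  then show "c \<odot>\<^bsub>R1\<^esub> a \<in> carrier R1" by (auto elim!: R1E simp: smult_R1 FF_smul)
next
  fix c a b assume "a \<in> carrier R1" "b \<in> carrier R1"
  then show "c \<odot>\<^bsub>R1\<^esub> (a \<oplus>\<^bsub>R1\<^esub> b) = c \<odot>\<^bsub>R1\<^esub> a \<oplus>\<^bsub>R1\<^esub> c \<odot>\<^bsub>R1\<^esub> b"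
    by (auto elim!: R1E simp: smult_R1 add_R1 FF_smul FF_add distrib_left)
next
  fix c d a assume "a \<in> carrier R1"
  then show "(c + d) \<odot>\<^bsub>R1\<^esub> a = c \<odot>\<^bsub>R1\<^esub> a \<oplus>\<^bsub>R1\<^esub> d \<odot>\<^bsub>R1\<^esub> a"
    by (auto elim!: R1E simp: smult_R1 add_R1 FF_smul distrib_right)
next
  fix c d a assume "a \<in> carrier R1"
  then show "(c * d) \<odot>\<^bsub>R1\<^esub> a = c \<odot>\<^bsub>R1\<^esub> (d \<odot>\<^bsub>R1\<^esub> a)"
    by (auto elim!: R1E simp: smult_R1 FF_smul mult.assoc)
next
  fix a assume "a \<in> carrier R1"
  then show "1 \<odot>\<^bsub>R1\<^esub> a = a"
    by (auto elim!: R1E simp: smult_R1)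
next
  fix c a b assume "a \<in> carrier R1" "b \<in> carrier R1"
  then show "(c \<odot>\<^bsub>R1\<^esub> a) \<otimes>\<^bsub>R1\<^esub> b = c \<odot>\<^bsub>R1\<^esub> (a \<otimes>\<^bsub>R1\<^esub> b)"
    by (auto elim!: R1E simp: smult_R1 mult_R1 FF_smul Phi_FF Phi_smul1)
next
  fix c a b assume "a \<in> carrier R1" "b \<in> carrier R1"
  then show "a \<otimes>\<^bsub>R1\<^esub> (c \<odot>\<^bsub>R1\<^esub> b) = c \<odot>\<^bsub>R1\<^esub> (a \<otimes>\<^bsub>R1\<^esub> b)"
    by (auto elim!: R1E simp: smult_R1 mult_R1 FF_smul Phi_FF Phi_smul2)
qed

end

sublocale bcl \<subseteq> R1: kal "bc R S E rs ss" by (rule kal.intro, rule kalg_R1)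

context bcl begin

definition D where "D u v = cl (dlt (u, v))"
abbreviation "incl \<equiv> bc_incl R S rs ss"
abbreviation "e \<equiv> bc_jones R S"
abbreviation "ER \<equiv> bc_E R lam"

lemma e_D: "e = D \<one> \<one>" by (simp add: bc_jones_def D_def)

lemma D_in[simp]: "u \<in> carrier R \<Longrightarrow> v \<in> carrier R \<Longrightarrow> D u v \<in> carrier R1"
  by (simp add: D_def)

lemma D_add1: "a \<in> carrier R \<Longrightarrow> b \<in> carrier R \<Longrightarrow> c \<in> carrier R \<Longrightarrow>
  D (a \<oplus> b) c = D a c \<oplus>\<^bsub>R1\<^esub> D b c"
  unfolding D_def by (simp add: add_R1) (intro cl_eqI FF_add FF_dlt G_addl, auto)
lemma D_add2: "a \<in> carrier R \<Longrightarrow> b \<in> carrier R \<Longrightarrow> c \<in> carrier R \<Longrightarrow>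
  D a (b \<oplus> c) = D a b \<oplus>\<^bsub>R1\<^esub> D a c"
  unfolding D_def by (simp add: add_R1) (intro cl_eqI FF_add FF_dlt G_addr, auto)
lemma D_smul1: "a \<in> carrier R \<Longrightarrow> b \<in> carrier R \<Longrightarrow> D (t \<odot> a) b = t \<odot>\<^bsub>R1\<^esub> D a b"
  unfolding D_def by (simp add: smult_R1) (intro cl_eqI FF_smul FF_dlt G_scl, auto)
lemma D_smul2: "a \<in> carrier R \<Longrightarrow> b \<in> carrier R \<Longrightarrow> D a (t \<odot> b) = t \<odot>\<^bsub>R1\<^esub> D a b"
  unfolding D_def by (simp add: smult_R1) (intro cl_eqI FF_smul FF_dlt G_scr, auto)
lemma D_bal: "a \<in> carrier R \<Longrightarrow> b \<in> carrier R \<Longrightarrow> s \<in> S \<Longrightarrow> D (a \<otimes> s) b = D a (s \<otimes> b)"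
  unfolding D_def by (intro cl_eqI FF_dlt G_bal) auto
lemma D_zero1: "b \<in> carrier R \<Longrightarrow> D \<zero> b = \<zero>\<^bsub>R1\<^esub>"
  using D_smul1[of \<zero> b 0] by simp
lemma D_zero2: "a \<in> carrier R \<Longrightarrow> D a \<zero> = \<zero>\<^bsub>R1\<^esub>"
  using D_smul2[of a \<zero> 0] by simp
lemma D_mult: "u \<in> carrier R \<Longrightarrow> v \<in> carrier R \<Longrightarrow> u' \<in> carrier R \<Longrightarrow> v' \<in> carrier R \<Longrightarrow>
  D u v \<otimes>\<^bsub>R1\<^esub> D u' v' = D (u \<otimes> E (v \<otimes> u')) v'"
  unfolding D_def by (simp add: mult_R1 Phi_dlt)

lemma D_sum1: "finite I \<Longrightarrow> (\<And>i. i \<in> I \<Longrightarrow> a i \<in> carrier R) \<Longrightarrow> b \<in> carrier R \<Longrightarrow>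
  D (\<Oplus>i\<in>I. a i) b = (\<Oplus>\<^bsub>R1\<^esub>i\<in>I. D (a i) b)"
proof (induction I rule: finite_induct)
  case empty then show ?case by (simp add: D_zero1)
next
  case (insert x I)
  then have "a \<in> I \<rightarrow> carrier R" "a x \<in> carrier R" by auto
  with insert show ?case
    by (simp add: finsum_insert R1.finsum_insert finsum_closed D_add1 Pi_def)
qed

lemma D_sum2: "finite I \<Longrightarrow> (\<And>i. i \<in> I \<Longrightarrow> b i \<in> carrier R) \<Longrightarrow> a \<in> carrier R \<Longrightarrow>
  D a (\<Oplus>i\<in>I. b i) = (\<Oplus>\<^bsub>R1\<^esub>i\<in>I. D a (b i))"
proof (induction I rule: finite_induct)
  case empty then show ?case by (simp add: D_zero2)
next
  case (insert x I)
  then have "b \<in> I \<rightarrow> carrier R" "b x \<in> carrier R" by auto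
  with insert show ?case
    by (simp add: finsum_insert R1.finsum_insert finsum_closed D_add2 Pi_def)
qed

lemma cl_sum: "finite I \<Longrightarrow> (\<And>i. i \<in> I \<Longrightarrow> g i \<in> FF) \<Longrightarrow>
  cl (\<lambda>p. \<Sum>i\<in>I. g i p) = (\<Oplus>\<^bsub>R1\<^esub>i\<in>I. cl (g i))"
proof (induction I rule: finite_induct)
  case empty then show ?case by (simp add: zero_R1)
next
  case (insert x I)
  then have "(\<lambda>p. \<Sum>i\<in>I. g i p) \<in> FF" by (intro FF_sum) auto
  with insert show ?case
    using add_R1[of "g x" "\<lambda>p. \<Sum>i\<in>I. g i p"] by (simp add: R1.finsum_insert Pi_def)
qed

lemma incl_sumD: "a \<in> carrier R \<Longrightarrow> incl a = (\<Oplus>\<^bsub>R1\<^esub>i\<in>{..<length rs}. D (a \<otimes> rs ! i) (ss ! i))"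
  unfolding bc_incl_def D_def by (rule cl_sum) auto

lemma one_sumD: "\<one>\<^bsub>R1\<^esub> = (\<Oplus>\<^bsub>R1\<^esub>i\<in>{..<length rs}. D (rs ! i) (ss ! i))"
  unfolding one_R1 U_def D_def by (rule cl_sum) auto

lemma incl_in[simp]: "a \<in> carrier R \<Longrightarrow> incl a \<in> carrier R1"
  by (simp add: incl_sumD R1.finsum_closed Pi_def)

lemma incl_mult_D: "a \<in> carrier R \<Longrightarrow> u \<in> carrier R \<Longrightarrow> v \<in> carrier R \<Longrightarrow>
  incl a \<otimes>\<^bsub>R1\<^esub> D u v = D (a \<otimes> u) v"
proof -
  assume a: "a \<in> carrier R" and u: "u \<in> carrier R" and v: "v \<in> carrier R"
  have "incl a \<otimes>\<^bsub>R1\<^esub> D u v = (\<Oplus>\<^bsub>R1\<^esub>i\<in>{..<length rs}. D (a \<otimes> rs ! i) (ss ! i) \<otimes>\<^bsub>R1\<^esub> D u v)"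
    using a u v by (simp add: incl_sumD R1.finsum_ldistr Pi_def)
  also have "\<dots> = (\<Oplus>\<^bsub>R1\<^esub>i\<in>{..<length rs}. D (a \<otimes> (rs ! i \<otimes> E (ss ! i \<otimes> u))) v)"
    using a u v by (intro R1.finsum_cong') (auto simp: D_mult m_assoc)
  also have "\<dots> = D (\<Oplus>i\<in>{..<length rs}. a \<otimes> (rs ! i \<otimes> E (ss ! i \<otimes> u))) v"
    using a u v by (intro D_sum1[symmetric]) auto
  also have "(\<Oplus>i\<in>{..<length rs}. a \<otimes> (rs ! i \<otimes> E (ss ! i \<otimes> u))) = a \<otimes> u"
    using a u qb2 by (simp add: finsum_rdistr[symmetric] Pi_def)
  finally show ?thesis .
qed

lemma D_mult_incl: "b \<in> carrier R \<Longrightarrow> u \<in> carrier R \<Longrightarrow> v \<in> carrier R \<Longrightarrow>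
  D u v \<otimes>\<^bsub>R1\<^esub> incl b = D u (v \<otimes> b)"
proof -
  assume b: "b \<in> carrier R" and u: "u \<in> carrier R" and v: "v \<in> carrier R"
  have "D u v \<otimes>\<^bsub>R1\<^esub> incl b = (\<Oplus>\<^bsub>R1\<^esub>i\<in>{..<length rs}. D u v \<otimes>\<^bsub>R1\<^esub> D (b \<otimes> rs ! i) (ss ! i))"
    using b u v by (simp add: incl_sumD R1.finsum_rdistr Pi_def)
  also have "\<dots> = (\<Oplus>\<^bsub>R1\<^esub>i\<in>{..<length rs}. D u (E (v \<otimes> b \<otimes> rs ! i) \<otimes> ss ! i))"
    using b u v by (intro R1.finsum_cong') (auto simp: D_mult m_assoc D_bal)
  also have "\<dots> = D u (\<Oplus>i\<in>{..<length rs}. E (v \<otimes> b \<otimes> rs ! i) \<otimes> ss ! i)"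
    using b u v by (intro D_sum2[symmetric]) auto
  also have "(\<Oplus>i\<in>{..<length rs}. E (v \<otimes> b \<otimes> rs ! i) \<otimes> ss ! i) = v \<otimes> b"
    using b v qb1 by simp
  finally show ?thesis .
qed

lemma D_eq: "u \<in> carrier R \<Longrightarrow> v \<in> carrier R \<Longrightarrow> D u v = incl u \<otimes>\<^bsub>R1\<^esub> e \<otimes>\<^bsub>R1\<^esub> incl v"
  by (simp add: e_D incl_mult_D D_mult_incl)

lemma e_in[simp]: "e \<in> carrier R1" by (simp add: e_D)

lemma R1_induct:
  assumes X: "X \<in> carrier R1"
    and P0: "P \<zero>\<^bsub>R1\<^esub>"
    and Padd: "\<And>x y. x \<in> carrier R1 \<Longrightarrow> y \<in> carrier R1 \<Longrightarrow> P x \<Longrightarrow> P y \<Longrightarrow> P (x \<oplus>\<^bsub>R1\<^esub> y)"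
    and Psm: "\<And>c x. x \<in> carrier R1 \<Longrightarrow> P x \<Longrightarrow> P (c \<odot>\<^bsub>R1\<^esub> x)"
    and PD: "\<And>u v. u \<in> carrier R \<Longrightarrow> v \<in> carrier R \<Longrightarrow> P (D u v)"
  shows "P X"
proof -
  obtain f where f: "f \<in> FF" "X = cl f" using X by (rule R1E)
  have gen: "P (cl (\<lambda>z. \<Sum>p\<in>A. c p * dlt p z))" if "finite A" "A \<subseteq> carrier R \<times> carrier R" for A c
    using that
  proof (induction A rule: finite_induct)
    case empty then show ?case using P0 by (simp add: zero_R1)
  next
    case (insert a A)
    have a: "fst a \<in> carrier R" "snd a \<in> carrier R" using insert by auto
    have da: "dlt a \<in> FF" using a FF_dlt[of "fst a" "snd a"] by simp
    have rest: "(\<lambda>z. \<Sum>p\<in>A. c p * dlt p z) \<in> FF"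
      using insert by (intro FF_sum FF_smul) (auto intro!: FF_dlt)
    have "cl (\<lambda>z. \<Sum>p\<in>insert a A. c p * dlt p z) = cl (\<lambda>z. c a * dlt a z + (\<Sum>p\<in>A. c p * dlt p z))"
      using insert by simp
    also have "\<dots> = c a \<odot>\<^bsub>R1\<^esub> D (fst a) (snd a) \<oplus>\<^bsub>R1\<^esub> cl (\<lambda>z. \<Sum>p\<in>A. c p * dlt p z)"
      using da rest by (simp add: D_def add_R1 smult_R1 FF_smul)
    moreover have "P (c a \<odot>\<^bsub>R1\<^esub> D (fst a) (snd a) \<oplus>\<^bsub>R1\<^esub> cl (\<lambda>z. \<Sum>p\<in>A. c p * dlt p z))"
      using insert a rest by (intro Padd Psm PD) auto
    ultimately show ?case by simp
  qed
  have "f = (\<lambda>z. \<Sum>p\<in>supp f. f p * dlt p z)"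
    using ext_dlt_self[OF FF_fin[OF f(1)]] by (simp add: ext_def)
  then have "X = cl (\<lambda>z. \<Sum>p\<in>supp f. f p * dlt p z)" using f by simp
  then show ?thesis using gen[of "supp f" f] f FF_iff by auto
qed

end

context bcl begin

lemma incl_mult: "a \<in> carrier R \<Longrightarrow> b \<in> carrier R \<Longrightarrow> incl a \<otimes>\<^bsub>R1\<^esub> incl b = incl (a \<otimes> b)"
proof -
  assume a: "a \<in> carrier R" and b: "b \<in> carrier R"
  have "incl a \<otimes>\<^bsub>R1\<^esub> incl b = (\<Oplus>\<^bsub>R1\<^esub>i\<in>{..<length rs}. incl a \<otimes>\<^bsub>R1\<^esub> D (b \<otimes> rs ! i) (ss ! i))"
    using a b by (simp add: incl_sumD[of b] R1.finsum_rdistr Pi_def)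
  also have "\<dots> = (\<Oplus>\<^bsub>R1\<^esub>i\<in>{..<length rs}. D (a \<otimes> b \<otimes> rs ! i) (ss ! i))"
    using a b by (intro R1.finsum_cong') (auto simp: incl_mult_D m_assoc)
  also have "\<dots> = incl (a \<otimes> b)" using a b by (simp add: incl_sumD)
  finally show ?thesis .
qed

lemma incl_add: "a \<in> carrier R \<Longrightarrow> b \<in> carrier R \<Longrightarrow> incl (a \<oplus> b) = incl a \<oplus>\<^bsub>R1\<^esub> incl b"
proof -
  assume a: "a \<in> carrier R" and b: "b \<in> carrier R"
  have "incl (a \<oplus> b) = (\<Oplus>\<^bsub>R1\<^esub>i\<in>{..<length rs}. D ((a \<oplus> b) \<otimes> rs ! i) (ss ! i))"
    using a b by (simp add: incl_sumD)
  also have "\<dots> = (\<Oplus>\<^bsub>R1\<^esub>i\<in>{..<length rs}. D (a \<otimes> rs ! i) (ss ! i) \<oplus>\<^bsub>R1\<^esub> D (b \<otimes> rs ! i) (ss ! i))"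
    using a b by (intro R1.finsum_cong'[OF refl]) (auto simp: l_distr D_add1)
  also have "\<dots> = incl a \<oplus>\<^bsub>R1\<^esub> incl b"
    using a b by (simp add: incl_sumD R1.finsum_addf Pi_def)
  finally show ?thesis .
qed

lemma incl_smul: "a \<in> carrier R \<Longrightarrow> incl (t \<odot> a) = t \<odot>\<^bsub>R1\<^esub> incl a"
proof -
  assume a: "a \<in> carrier R"
  have "incl (t \<odot> a) = (\<Oplus>\<^bsub>R1\<^esub>i\<in>{..<length rs}. D ((t \<odot> a) \<otimes> rs ! i) (ss ! i))"
    using a by (simp add: incl_sumD)
  also have "\<dots> = (\<Oplus>\<^bsub>R1\<^esub>i\<in>{..<length rs}. t \<odot>\<^bsub>R1\<^esub> D (a \<otimes> rs ! i) (ss ! i))"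
    using a by (intro R1.finsum_cong'[OF refl]) (auto simp: smult_ml D_smul1)
  also have "\<dots> = t \<odot>\<^bsub>R1\<^esub> incl a"
    using a by (simp add: incl_sumD R1.smult_finsum Pi_def)
  finally show ?thesis .
qed

lemma incl_one: "incl \<one> = \<one>\<^bsub>R1\<^esub>"
  unfolding incl_sumD[OF one_closed] one_sumD by (intro R1.finsum_cong'[OF refl]) auto

lemma incl_zero: "incl \<zero> = \<zero>\<^bsub>R1\<^esub>"
  using incl_smul[of \<zero> 0] by simp

lemma e_comm: "s \<in> S \<Longrightarrow> e \<otimes>\<^bsub>R1\<^esub> incl s = incl s \<otimes>\<^bsub>R1\<^esub> e"
  using D_bal[of \<one> \<one> s] by (simp add: e_D incl_mult_D D_mult_incl)

lemma eae: "a \<in> carrier R \<Longrightarrow> e \<otimes>\<^bsub>R1\<^esub> incl a \<otimes>\<^bsub>R1\<^esub> e = incl (E a) \<otimes>\<^bsub>R1\<^esub> e"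
  by (simp add: e_D incl_mult_D D_mult_incl D_mult E1)

definition extR where "extR f = (\<Oplus>p\<in>supp f. f p \<odot> (fst p \<otimes> snd p))"

lemma extR_superset:
  assumes f: "f \<in> FF" and A: "finite A" "supp f \<subseteq> A" "A \<subseteq> carrier R \<times> carrier R"
  shows "extR f = (\<Oplus>p\<in>A. f p \<odot> (fst p \<otimes> snd p))"
  unfolding extR_def
proof (rule add.finprod_mono_neutral_cong_left[OF A(1,2)])
  fix i assume "i \<in> A - supp f"
  then show "f i \<odot> (fst i \<otimes> snd i) = \<zero>" using A by (auto simp: supp_def)
next
  show "(\<lambda>p. f p \<odot> (fst p \<otimes> snd p)) \<in> A \<rightarrow> carrier R" using A by auto
qed simp

lemma extR_in[simp]: "f \<in> FF \<Longrightarrow> extR f \<in> carrier R"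
  unfolding extR_def by (rule finsum_closed) (auto dest: FF_supp)

lemma extR_lin: assumes f: "f \<in> FF" and g: "g \<in> FF"
  shows "extR (\<lambda>p. a * f p + b * g p) = a \<odot> extR f \<oplus> b \<odot> extR g"
proof -
  let ?A = "supp f \<union> supp g"
  have A: "finite ?A" "?A \<subseteq> carrier R \<times> carrier R" using f g FF_iff by auto
  have h: "(\<lambda>p. a * f p + b * g p) \<in> FF" using FF_lin[OF f g] .
  have "extR (\<lambda>p. a * f p + b * g p) = (\<Oplus>p\<in>?A. (a * f p + b * g p) \<odot> (fst p \<otimes> snd p))"
    by (rule extR_superset[OF h A(1) supp_lin A(2)])
  also have "\<dots> = (\<Oplus>p\<in>?A. a \<odot> (f p \<odot> (fst p \<otimes> snd p)) \<oplus> b \<odot> (g p \<odot> (fst p \<otimes> snd p)))"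
    using A by (intro finsum_cong') (auto simp: smult_add_l smult_assoc)
  also have "\<dots> = (\<Oplus>p\<in>?A. a \<odot> (f p \<odot> (fst p \<otimes> snd p))) \<oplus> (\<Oplus>p\<in>?A. b \<odot> (g p \<odot> (fst p \<otimes> snd p)))"
    using A by (intro finsum_addf) auto
  also have "\<dots> = a \<odot> (\<Oplus>p\<in>?A. f p \<odot> (fst p \<otimes> snd p)) \<oplus> b \<odot> (\<Oplus>p\<in>?A. g p \<odot> (fst p \<otimes> snd p))"
    using A by (simp add: smult_finsum Pi_def subset_iff)
  also have "\<dots> = a \<odot> extR f \<oplus> b \<odot> extR g"
    using A f g by (simp add: extR_superset[of f ?A] extR_superset[of g ?A] FF_iff)
  finally show ?thesis .
qed

lemma extR_diff: "f \<in> FF \<Longrightarrow> g \<in> FF \<Longrightarrow> extR (\<lambda>p. f p - g p) = extR f \<ominus> extR g"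
  using extR_lin[of f g 1 "-1"] by (simp add: smult_minus minus_eq)
lemma extR_add: "f \<in> FF \<Longrightarrow> g \<in> FF \<Longrightarrow> extR (\<lambda>p. f p + g p) = extR f \<oplus> extR g"
  using extR_lin[of f g 1 1] by simp
lemma extR_smul: "f \<in> FF \<Longrightarrow> extR (\<lambda>p. c * f p) = c \<odot> extR f"
  using extR_lin[of f f c 0] by simp

lemma extR_dlt: "a \<in> carrier R \<Longrightarrow> b \<in> carrier R \<Longrightarrow> extR (dlt (a, b)) = a \<otimes> b"
  by (simp add: extR_def dlt_def)

lemma extR_TT: "f \<in> TT \<Longrightarrow> extR f = \<zero>"
proof (induction rule: trel.induct)
  case zero then show ?case by (simp add: extR_def supp_def)
next
  case (add f g) then show ?case by (simp add: extR_add TT_FF)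
next
  case (smul f c) then show ?case by (simp add: extR_smul TT_FF)
next
  case (addl a b c)
  then have "extR (\<lambda>p. dlt (a \<oplus> b, c) p - dlt (a, c) p - dlt (b, c) p) = (a \<oplus> b) \<otimes> c \<ominus> a \<otimes> c \<ominus> b \<otimes> c"
    using extR_diff[of "\<lambda>p. dlt (a \<oplus> b, c) p - dlt (a, c) p" "dlt (b, c)"]
    by (simp add: extR_diff FF_diff extR_dlt)
  also have "\<dots> = \<zero>" using addl by algebra
  finally show ?case .
next
  case (addr a b c)
  then have "extR (\<lambda>p. dlt (a, b \<oplus> c) p - dlt (a, b) p - dlt (a, c) p) = a \<otimes> (b \<oplus> c) \<ominus> a \<otimes> b \<ominus> a \<otimes> c"
    using extR_diff[of "\<lambda>p. dlt (a, b \<oplus> c) p - dlt (a, b) p" "dlt (a, c)"]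
    by (simp add: extR_diff FF_diff extR_dlt)
  also have "\<dots> = \<zero>" using addr by algebra
  finally show ?case .
next
  case (bal a b s)
  then show ?case using extR_diff[of "dlt (a \<otimes> s, b)" "dlt (a, s \<otimes> b)"]
    by (simp add: extR_dlt m_assoc r_neg minus_eq)
next
  case (scl a b t)
  then show ?case using extR_diff[of "dlt (t \<odot> a, b)" "\<lambda>p. t * dlt (a, b) p"]
    by (simp add: FF_smul extR_smul extR_dlt smult_ml r_neg minus_eq)
next
  case (scr a b t)
  then show ?case using extR_diff[of "dlt (a, t \<odot> b)" "\<lambda>p. t * dlt (a, b) p"]
    by (simp add: FF_smul extR_smul extR_dlt smult_mr r_neg minus_eq)
qed

lemma extR_eqv: "f \<in> FF \<Longrightarrow> g \<in> FF \<Longrightarrow> eqv f g \<Longrightarrow> extR f = extR g"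
proof -
  assume f: "f \<in> FF" and g: "g \<in> FF" and e: "eqv f g"
  have "extR f \<ominus> extR g = \<zero>" using e f g by (simp add: eqv_def extR_diff[symmetric] extR_TT)
  moreover have "extR f = extR f \<ominus> extR g \<oplus> extR g" using f g extR_in by algebra
  ultimately show ?thesis using f g by simp
qed

lemma ER_cl: "f \<in> FF \<Longrightarrow> ER (cl f) = lam \<odot> extR f"
  using trep_cl[of f] extR_eqv[of "trep (cl f)" f]
  by (simp add: bc_E_def Let_def extR_def)

lemma ER_D: "u \<in> carrier R \<Longrightarrow> v \<in> carrier R \<Longrightarrow> ER (D u v) = lam \<odot> (u \<otimes> v)"
  by (simp add: D_def ER_cl extR_dlt)

lemma ER_in[simp]: "X \<in> carrier R1 \<Longrightarrow> ER X \<in> carrier R"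
  by (auto elim!: R1E simp: ER_cl)

lemma ER_add: "X \<in> carrier R1 \<Longrightarrow> Y \<in> carrier R1 \<Longrightarrow> ER (X \<oplus>\<^bsub>R1\<^esub> Y) = ER X \<oplus> ER Y"
  by (auto elim!: R1E simp: ER_cl add_R1 FF_add extR_add smult_add_r)

lemma ER_smul: "X \<in> carrier R1 \<Longrightarrow> ER (c \<odot>\<^bsub>R1\<^esub> X) = c \<odot> ER X"
  by (auto elim!: R1E simp: ER_cl smult_R1 FF_smul extR_smul smult_assoc[symmetric] mult.commute)

lemma ER_zero: "ER \<zero>\<^bsub>R1\<^esub> = \<zero>"
  by (simp add: zero_R1 ER_cl extR_def supp_def)

lemma ER_finsum: "finite I \<Longrightarrow> (\<And>i. i \<in> I \<Longrightarrow> X i \<in> carrier R1) \<Longrightarrow>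
  ER (\<Oplus>\<^bsub>R1\<^esub>i\<in>I. X i) = (\<Oplus>i\<in>I. ER (X i))"
proof (induction I rule: finite_induct)
  case empty then show ?case by (simp add: ER_zero)
next
  case (insert x I)
  then show ?case by (simp add: R1.finsum_insert finsum_insert ER_add R1.finsum_closed Pi_def)
qed

lemma ER_incl: "a \<in> carrier R \<Longrightarrow> ER (incl a) = a"
proof -
  assume a: "a \<in> carrier R"
  have "ER (incl a) = (\<Oplus>i\<in>{..<length rs}. ER (D (a \<otimes> rs ! i) (ss ! i)))"
    using a by (simp add: incl_sumD) (rule ER_finsum, auto)
  also have "\<dots> = (\<Oplus>i\<in>{..<length rs}. lam \<odot> (a \<otimes> (rs ! i \<otimes> ss ! i)))"
    using a by (intro finsum_cong'[OF refl]) (auto simp: ER_D m_assoc)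
  also have "\<dots> = lam \<odot> (a \<otimes> (\<Oplus>i\<in>{..<length rs}. rs ! i \<otimes> ss ! i))"
    using a by (simp add: smult_finsum finsum_rdistr Pi_def)
  also have "\<dots> = a" using a lam_nz by (simp add: xy smult_mr smult_assoc[symmetric])
  finally show ?thesis .
qed

lemma ER_one: "ER \<one>\<^bsub>R1\<^esub> = \<one>"
  using ER_incl[of \<one>] by (simp add: incl_one)

lemma incl_inj: "a \<in> carrier R \<Longrightarrow> b \<in> carrier R \<Longrightarrow> incl a = incl b \<Longrightarrow> a = b"
  by (metis ER_incl)

lemma ER_left: assumes a: "a \<in> carrier R" and X: "X \<in> carrier R1"
  shows "ER (incl a \<otimes>\<^bsub>R1\<^esub> X) = a \<otimes> ER X"
  using X
proof (rule R1_induct)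
  show "ER (incl a \<otimes>\<^bsub>R1\<^esub> \<zero>\<^bsub>R1\<^esub>) = a \<otimes> ER \<zero>\<^bsub>R1\<^esub>" using a by (simp add: ER_zero)
next
  fix x y assume "x \<in> carrier R1" "y \<in> carrier R1" "ER (incl a \<otimes>\<^bsub>R1\<^esub> x) = a \<otimes> ER x"
    "ER (incl a \<otimes>\<^bsub>R1\<^esub> y) = a \<otimes> ER y"
  then show "ER (incl a \<otimes>\<^bsub>R1\<^esub> (x \<oplus>\<^bsub>R1\<^esub> y)) = a \<otimes> ER (x \<oplus>\<^bsub>R1\<^esub> y)"
    using a by (simp add: R1.r_distr ER_add r_distr)
next
  fix c x assume "x \<in> carrier R1" "ER (incl a \<otimes>\<^bsub>R1\<^esub> x) = a \<otimes> ER x"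
  then show "ER (incl a \<otimes>\<^bsub>R1\<^esub> (c \<odot>\<^bsub>R1\<^esub> x)) = a \<otimes> ER (c \<odot>\<^bsub>R1\<^esub> x)"
    using a by (simp add: R1.smult_mr ER_smul smult_mr)
next
  fix u v assume "u \<in> carrier R" "v \<in> carrier R"
  then show "ER (incl a \<otimes>\<^bsub>R1\<^esub> D u v) = a \<otimes> ER (D u v)"
    using a by (simp add: incl_mult_D ER_D smult_mr m_assoc)
qed

lemma ER_right: assumes b: "b \<in> carrier R" and X: "X \<in> carrier R1"
  shows "ER (X \<otimes>\<^bsub>R1\<^esub> incl b) = ER X \<otimes> b"
  using X
proof (rule R1_induct)
  show "ER (\<zero>\<^bsub>R1\<^esub> \<otimes>\<^bsub>R1\<^esub> incl b) = ER \<zero>\<^bsub>R1\<^esub> \<otimes> b" using b by (simp add: ER_zero)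
next
  fix x y assume "x \<in> carrier R1" "y \<in> carrier R1" "ER (x \<otimes>\<^bsub>R1\<^esub> incl b) = ER x \<otimes> b"
    "ER (y \<otimes>\<^bsub>R1\<^esub> incl b) = ER y \<otimes> b"
  then show "ER ((x \<oplus>\<^bsub>R1\<^esub> y) \<otimes>\<^bsub>R1\<^esub> incl b) = ER (x \<oplus>\<^bsub>R1\<^esub> y) \<otimes> b"
    using b by (simp add: R1.l_distr ER_add l_distr)
next
  fix c x assume "x \<in> carrier R1" "ER (x \<otimes>\<^bsub>R1\<^esub> incl b) = ER x \<otimes> b"
  then show "ER ((c \<odot>\<^bsub>R1\<^esub> x) \<otimes>\<^bsub>R1\<^esub> incl b) = ER (c \<odot>\<^bsub>R1\<^esub> x) \<otimes> b"
    using b by (simp add: R1.smult_ml ER_smul smult_ml)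
next
  fix u v assume "u \<in> carrier R" "v \<in> carrier R"
  then show "ER (D u v \<otimes>\<^bsub>R1\<^esub> incl b) = ER (D u v) \<otimes> b"
    using b by (simp add: D_mult_incl ER_D smult_ml m_assoc)
qed

lemma ER_incl_e: "a \<in> carrier R \<Longrightarrow> ER (incl a \<otimes>\<^bsub>R1\<^esub> e) = lam \<odot> a"
  by (simp add: e_D incl_mult_D ER_D)

end

context bcl begin

abbreviation "LL \<equiv> bc_left R S lam rs"
abbreviation "RR \<equiv> bc_right R S ss"

lemma LL_len: "length LL = length rs" by (simp add: bc_left_def)
lemma RR_len: "length RR = length rs" by (simp add: bc_right_def len)
lemma LL_nth: "i < length rs \<Longrightarrow> LL ! i = D (inverse lam \<odot> rs ! i) \<one>"
  by (simp add: bc_left_def D_def)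
lemma RR_nth: "i < length rs \<Longrightarrow> RR ! i = D \<one> (ss ! i)"
  using len by (simp add: bc_right_def D_def)

lemma lam_cancel: "x \<in> carrier R \<Longrightarrow> lam \<odot> (inverse lam \<odot> x) = x"
  using lam_nz by (simp add: smult_assoc[symmetric])
lemma lam_cancel1: "X \<in> carrier R1 \<Longrightarrow> inverse lam \<odot>\<^bsub>R1\<^esub> (lam \<odot>\<^bsub>R1\<^esub> X) = X"
  using lam_nz by (simp add: R1.smult_assoc[symmetric])

lemma lam_cancel2: "X \<in> carrier R1 \<Longrightarrow> lam \<odot>\<^bsub>R1\<^esub> (inverse lam \<odot>\<^bsub>R1\<^esub> X) = X"
  using lam_nz by (simp add: R1.smult_assoc[symmetric])

lemmas R1_induct' = R1_induct[consumes 1, case_names zero add smul D]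

lemma LR_term: "i < length rs \<Longrightarrow> LL ! i \<otimes>\<^bsub>R1\<^esub> RR ! i = inverse lam \<odot>\<^bsub>R1\<^esub> D (rs ! i) (ss ! i)"
proof -
  assume i: "i < length rs"
  have "LL ! i \<otimes>\<^bsub>R1\<^esub> RR ! i = D (inverse lam \<odot> rs ! i \<otimes> E (\<one> \<otimes> \<one>)) (ss ! i)"
    using i by (simp add: LL_nth RR_nth D_mult del: l_one)
  also have "\<dots> = D (inverse lam \<odot> rs ! i) (ss ! i)" using i by (simp add: E1)
  also have "\<dots> = inverse lam \<odot>\<^bsub>R1\<^esub> D (rs ! i) (ss ! i)" using i by (simp add: D_smul1)
  finally show ?thesis .
qed

lemma qb1_term: "u \<in> carrier R \<Longrightarrow> v \<in> carrier R \<Longrightarrow> i < length rs \<Longrightarrow>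
  incl (ER (D u v \<otimes>\<^bsub>R1\<^esub> LL ! i)) \<otimes>\<^bsub>R1\<^esub> RR ! i = D u (E (v \<otimes> rs ! i) \<otimes> ss ! i)"
proof -
  assume u: "u \<in> carrier R" and v: "v \<in> carrier R" and i: "i < length rs"
  have "D u v \<otimes>\<^bsub>R1\<^esub> LL ! i = D (u \<otimes> E (v \<otimes> (inverse lam \<odot> rs ! i))) \<one>"
    using u v i by (simp add: LL_nth D_mult)
  also have "u \<otimes> E (v \<otimes> (inverse lam \<odot> rs ! i)) = inverse lam \<odot> (u \<otimes> E (v \<otimes> rs ! i))"
    using u v i by (simp add: smult_mr E_smult)
  finally have 1: "ER (D u v \<otimes>\<^bsub>R1\<^esub> LL ! i) = u \<otimes> E (v \<otimes> rs ! i)"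
    using u v i by (simp add: ER_D lam_cancel)
  show ?thesis using u v i
    by (simp add: 1 RR_nth incl_mult_D D_bal)
qed

lemma qb2_term: "u \<in> carrier R \<Longrightarrow> v \<in> carrier R \<Longrightarrow> i < length rs \<Longrightarrow>
  LL ! i \<otimes>\<^bsub>R1\<^esub> incl (ER (RR ! i \<otimes>\<^bsub>R1\<^esub> D u v)) = D (rs ! i \<otimes> E (ss ! i \<otimes> u)) v"
proof -
  assume u: "u \<in> carrier R" and v: "v \<in> carrier R" and i: "i < length rs"
  have 1: "ER (RR ! i \<otimes>\<^bsub>R1\<^esub> D u v) = lam \<odot> (E (ss ! i \<otimes> u) \<otimes> v)"
    using u v i by (simp add: RR_nth D_mult ER_D)
  have "LL ! i \<otimes>\<^bsub>R1\<^esub> incl (ER (RR ! i \<otimes>\<^bsub>R1\<^esub> D u v)) = D (inverse lam \<odot> rs ! i) (lam \<odot> (E (ss ! i \<otimes> u) \<otimes> v))"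
    using u v i by (simp add: 1 LL_nth D_mult_incl)
  also have "\<dots> = D (rs ! i) (E (ss ! i \<otimes> u) \<otimes> v)"
    using u v i by (simp add: D_smul1 D_smul2 lam_cancel2)
  also have "\<dots> = D (rs ! i \<otimes> E (ss ! i \<otimes> u)) v"
    using u v i by (simp add: D_bal)
  finally show ?thesis .
qed

lemma qb1_new: "m \<in> carrier R1 \<Longrightarrow>
  (\<Oplus>\<^bsub>R1\<^esub>i\<in>{..<length rs}. incl (ER (m \<otimes>\<^bsub>R1\<^esub> LL ! i)) \<otimes>\<^bsub>R1\<^esub> RR ! i) = m"
proof (induction m rule: R1_induct')
  case zero
  have "(\<Oplus>\<^bsub>R1\<^esub>i\<in>{..<length rs}. incl (ER (\<zero>\<^bsub>R1\<^esub> \<otimes>\<^bsub>R1\<^esub> LL ! i)) \<otimes>\<^bsub>R1\<^esub> RR ! i)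
      = (\<Oplus>\<^bsub>R1\<^esub>i\<in>{..<length rs}. \<zero>\<^bsub>R1\<^esub>)"
    by (intro R1.finsum_cong'[OF refl]) (auto simp: LL_nth RR_nth ER_zero incl_zero)
  then show ?case by simp
next
  case (add x y)
  have "(\<Oplus>\<^bsub>R1\<^esub>i\<in>{..<length rs}. incl (ER ((x \<oplus>\<^bsub>R1\<^esub> y) \<otimes>\<^bsub>R1\<^esub> LL ! i)) \<otimes>\<^bsub>R1\<^esub> RR ! i)
    = (\<Oplus>\<^bsub>R1\<^esub>i\<in>{..<length rs}. incl (ER (x \<otimes>\<^bsub>R1\<^esub> LL ! i)) \<otimes>\<^bsub>R1\<^esub> RR ! i
        \<oplus>\<^bsub>R1\<^esub> incl (ER (y \<otimes>\<^bsub>R1\<^esub> LL ! i)) \<otimes>\<^bsub>R1\<^esub> RR ! i)"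
    using add by (intro R1.finsum_cong'[OF refl])
      (auto simp: LL_nth RR_nth R1.l_distr ER_add incl_add)
  also have "\<dots> = x \<oplus>\<^bsub>R1\<^esub> y"
    using add by (simp add: R1.finsum_addf Pi_def LL_nth RR_nth)
  finally show ?case .
next
  case (smul c x)
  have "(\<Oplus>\<^bsub>R1\<^esub>i\<in>{..<length rs}. incl (ER ((c \<odot>\<^bsub>R1\<^esub> x) \<otimes>\<^bsub>R1\<^esub> LL ! i)) \<otimes>\<^bsub>R1\<^esub> RR ! i)
    = (\<Oplus>\<^bsub>R1\<^esub>i\<in>{..<length rs}. c \<odot>\<^bsub>R1\<^esub> (incl (ER (x \<otimes>\<^bsub>R1\<^esub> LL ! i)) \<otimes>\<^bsub>R1\<^esub> RR ! i))"
    using smul by (intro R1.finsum_cong'[OF refl])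
      (auto simp: LL_nth RR_nth R1.smult_ml ER_smul incl_smul)
  also have "\<dots> = c \<odot>\<^bsub>R1\<^esub> x"
    using smul by (simp add: R1.smult_finsum[symmetric] Pi_def LL_nth RR_nth)
  finally show ?case .
next
  case (D u v)
  have "(\<Oplus>\<^bsub>R1\<^esub>i\<in>{..<length rs}. incl (ER (D u v \<otimes>\<^bsub>R1\<^esub> LL ! i)) \<otimes>\<^bsub>R1\<^esub> RR ! i)
     = (\<Oplus>\<^bsub>R1\<^esub>i\<in>{..<length rs}. D u (E (v \<otimes> rs ! i) \<otimes> ss ! i))"
    using D by (intro R1.finsum_cong'[OF refl]) (auto simp: qb1_term)
  also have "\<dots> = D u (\<Oplus>i\<in>{..<length rs}. E (v \<otimes> rs ! i) \<otimes> ss ! i)"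
    using D by (intro D_sum2[symmetric]) auto
  also have "\<dots> = D u v" using D qb1 by simp
  finally show ?case .
qed

lemma qb2_new: "m \<in> carrier R1 \<Longrightarrow>
  (\<Oplus>\<^bsub>R1\<^esub>i\<in>{..<length rs}. LL ! i \<otimes>\<^bsub>R1\<^esub> incl (ER (RR ! i \<otimes>\<^bsub>R1\<^esub> m))) = m"
proof (induction m rule: R1_induct')
  case zero
  have "(\<Oplus>\<^bsub>R1\<^esub>i\<in>{..<length rs}. LL ! i \<otimes>\<^bsub>R1\<^esub> incl (ER (RR ! i \<otimes>\<^bsub>R1\<^esub> \<zero>\<^bsub>R1\<^esub>)))
      = (\<Oplus>\<^bsub>R1\<^esub>i\<in>{..<length rs}. \<zero>\<^bsub>R1\<^esub>)"
    by (intro R1.finsum_cong'[OF refl]) (auto simp: LL_nth RR_nth ER_zero incl_zero)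
  then show ?case by simp
next
  case (add x y)
  have "(\<Oplus>\<^bsub>R1\<^esub>i\<in>{..<length rs}. LL ! i \<otimes>\<^bsub>R1\<^esub> incl (ER (RR ! i \<otimes>\<^bsub>R1\<^esub> (x \<oplus>\<^bsub>R1\<^esub> y))))
    = (\<Oplus>\<^bsub>R1\<^esub>i\<in>{..<length rs}. LL ! i \<otimes>\<^bsub>R1\<^esub> incl (ER (RR ! i \<otimes>\<^bsub>R1\<^esub> x))
        \<oplus>\<^bsub>R1\<^esub> LL ! i \<otimes>\<^bsub>R1\<^esub> incl (ER (RR ! i \<otimes>\<^bsub>R1\<^esub> y)))"
    using add by (intro R1.finsum_cong'[OF refl])
      (auto simp: LL_nth RR_nth R1.r_distr ER_add incl_add)
  also have "\<dots> = x \<oplus>\<^bsub>R1\<^esub> y"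
    using add by (simp add: R1.finsum_addf Pi_def LL_nth RR_nth)
  finally show ?case .
next
  case (smul c x)
  have "(\<Oplus>\<^bsub>R1\<^esub>i\<in>{..<length rs}. LL ! i \<otimes>\<^bsub>R1\<^esub> incl (ER (RR ! i \<otimes>\<^bsub>R1\<^esub> (c \<odot>\<^bsub>R1\<^esub> x))))
    = (\<Oplus>\<^bsub>R1\<^esub>i\<in>{..<length rs}. c \<odot>\<^bsub>R1\<^esub> (LL ! i \<otimes>\<^bsub>R1\<^esub> incl (ER (RR ! i \<otimes>\<^bsub>R1\<^esub> x))))"
    using smul by (intro R1.finsum_cong'[OF refl])
      (auto simp: LL_nth RR_nth R1.smult_mr ER_smul incl_smul)
  also have "\<dots> = c \<odot>\<^bsub>R1\<^esub> x"
    using smul by (simp add: R1.smult_finsum[symmetric] Pi_def LL_nth RR_nth)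
  finally show ?case .
next
  case (D u v)
  have "(\<Oplus>\<^bsub>R1\<^esub>i\<in>{..<length rs}. LL ! i \<otimes>\<^bsub>R1\<^esub> incl (ER (RR ! i \<otimes>\<^bsub>R1\<^esub> D u v)))
     = (\<Oplus>\<^bsub>R1\<^esub>i\<in>{..<length rs}. D (rs ! i \<otimes> E (ss ! i \<otimes> u)) v)"
    using D by (intro R1.finsum_cong'[OF refl]) (auto simp: qb2_term)
  also have "\<dots> = D (\<Oplus>i\<in>{..<length rs}. rs ! i \<otimes> E (ss ! i \<otimes> u)) v"
    using D by (intro D_sum1[symmetric]) auto
  also have "\<dots> = D u v" using D qb2 by simp
  finally show ?case .
qed

lemma xy_new: "(\<Oplus>\<^bsub>R1\<^esub>i\<in>{..<length rs}. LL ! i \<otimes>\<^bsub>R1\<^esub> RR ! i) = inverse lam \<odot>\<^bsub>R1\<^esub> \<one>\<^bsub>R1\<^esub>"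
proof -
  have "(\<Oplus>\<^bsub>R1\<^esub>i\<in>{..<length rs}. LL ! i \<otimes>\<^bsub>R1\<^esub> RR ! i)
      = (\<Oplus>\<^bsub>R1\<^esub>i\<in>{..<length rs}. inverse lam \<odot>\<^bsub>R1\<^esub> D (rs ! i) (ss ! i))"
    by (intro R1.finsum_cong'[OF refl]) (simp_all add: LR_term)
  also have "\<dots> = inverse lam \<odot>\<^bsub>R1\<^esub> \<one>\<^bsub>R1\<^esub>"
    by (simp add: one_sumD R1.smult_finsum Pi_def)
  finally show ?thesis .
qed

lemma bcl_next: "bcl R1 (incl ` carrier R) (incl \<circ> ER) LL RR lam"
proof (intro bcl.intro bcl_axioms.intro)
  show "kal R1" by (rule kal.intro, rule kalg_R1)
next
  show "subalg R1 (incl ` carrier R)"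
    unfolding subalg_def
  proof (intro conjI ballI allI)
    show "incl ` carrier R \<subseteq> carrier R1" by auto
    show "\<one>\<^bsub>R1\<^esub> \<in> incl ` carrier R" using incl_one by (metis image_eqI one_closed)
  next
    fix a b assume "a \<in> incl ` carrier R" "b \<in> incl ` carrier R"
    then show "a \<oplus>\<^bsub>R1\<^esub> b \<in> incl ` carrier R" by (auto simp: incl_add[symmetric])
  next
    fix a b assume "a \<in> incl ` carrier R" "b \<in> incl ` carrier R"
    then show "a \<otimes>\<^bsub>R1\<^esub> b \<in> incl ` carrier R" by (auto simp: incl_mult)
  next
    fix c a assume "a \<in> incl ` carrier R"
    then show "c \<odot>\<^bsub>R1\<^esub> a \<in> incl ` carrier R" by (auto simp: incl_smul[symmetric])
  qed
next
  show "\<forall>m\<in>carrier R1. (incl \<circ> ER) m \<in> incl ` carrier R" by auto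
next
  show "\<forall>a\<in>carrier R1. \<forall>b\<in>carrier R1. (incl \<circ> ER) (a \<oplus>\<^bsub>R1\<^esub> b) = (incl \<circ> ER) a \<oplus>\<^bsub>R1\<^esub> (incl \<circ> ER) b"
    by (simp add: ER_add incl_add)
next
  show "\<forall>n\<in>incl ` carrier R. \<forall>m\<in>carrier R1. (incl \<circ> ER) (n \<otimes>\<^bsub>R1\<^esub> m) = n \<otimes>\<^bsub>R1\<^esub> (incl \<circ> ER) m"
    by (auto simp: ER_left incl_mult)
next
  show "\<forall>n\<in>incl ` carrier R. \<forall>m\<in>carrier R1. (incl \<circ> ER) (m \<otimes>\<^bsub>R1\<^esub> n) = (incl \<circ> ER) m \<otimes>\<^bsub>R1\<^esub> n"
    by (auto simp: ER_right incl_mult)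
next
  show "length LL = length RR" by (simp add: LL_len RR_len)
next
  show "set LL \<subseteq> carrier R1" using rs_in by (auto simp: bc_left_def)
next
  show "set RR \<subseteq> carrier R1" using ss_in by (auto simp: bc_right_def)
next
  show "\<forall>m\<in>carrier R1. (\<Oplus>\<^bsub>R1\<^esub>i\<in>{..<length LL}. (incl \<circ> ER) (m \<otimes>\<^bsub>R1\<^esub> LL ! i) \<otimes>\<^bsub>R1\<^esub> RR ! i) = m"
    using qb1_new by (simp add: LL_len)
next
  show "\<forall>m\<in>carrier R1. (\<Oplus>\<^bsub>R1\<^esub>i\<in>{..<length LL}. LL ! i \<otimes>\<^bsub>R1\<^esub> (incl \<circ> ER) (RR ! i \<otimes>\<^bsub>R1\<^esub> m)) = m"
    using qb2_new by (simp add: LL_len)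
next
  show "(incl \<circ> ER) \<one>\<^bsub>R1\<^esub> = \<one>\<^bsub>R1\<^esub>" by (simp add: ER_one incl_one)
next
  show "lam \<noteq> 0" by (rule lam_nz)
next
  show "(\<Oplus>\<^bsub>R1\<^esub>i\<in>{..<length LL}. LL ! i \<otimes>\<^bsub>R1\<^esub> RR ! i) = inverse lam \<odot>\<^bsub>R1\<^esub> \<one>\<^bsub>R1\<^esub>"
    using xy_new by (simp add: LL_len)
qed

end

context bcl begin

lemma lam_cancel': "x \<in> carrier R \<Longrightarrow> inverse lam \<odot> (lam \<odot> x) = x"
  using lam_nz by (simp add: smult_assoc[symmetric])

lemma D_inj2: "m \<in> carrier R \<Longrightarrow> m' \<in> carrier R \<Longrightarrow> D \<one> m = D \<one> m' \<Longrightarrow> m = m'"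
proof -
  assume m: "m \<in> carrier R" and m': "m' \<in> carrier R" and eq: "D \<one> m = D \<one> m'"
  have "lam \<odot> m = lam \<odot> m'" using arg_cong[OF eq, of ER] m m' by (simp add: ER_D)
  then have "inverse lam \<odot> (lam \<odot> m) = inverse lam \<odot> (lam \<odot> m')" by simp
  then show ?thesis using m m' by (simp add: lam_cancel')
qed

lemma ey_exists: "y \<in> carrier R1 \<Longrightarrow> \<exists>m\<in>carrier R. e \<otimes>\<^bsub>R1\<^esub> y = D \<one> m"
proof (induction y rule: R1_induct')
  case zero
  then show ?case by (intro bexI[of _ \<zero>]) (simp_all add: D_zero2)
next
  case (add x y)
  then obtain m1 m2 where "m1 \<in> carrier R" "e \<otimes>\<^bsub>R1\<^esub> x = D \<one> m1" "m2 \<in> carrier R" "e \<otimes>\<^bsub>R1\<^esub> y = D \<one> m2"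
    by blast
  with add show ?case by (intro bexI[of _ "m1 \<oplus> m2"]) (simp_all add: R1.r_distr D_add2)
next
  case (smul c x)
  then obtain m1 where "m1 \<in> carrier R" "e \<otimes>\<^bsub>R1\<^esub> x = D \<one> m1" by blast
  with smul show ?case by (intro bexI[of _ "c \<odot> m1"]) (simp_all add: R1.smult_mr D_smul2)
next
  case (D u v)
  have "e \<otimes>\<^bsub>R1\<^esub> D u v = D (\<one> \<otimes> E u) v" using D by (simp add: e_D D_mult)
  also have "\<dots> = D \<one> (E u \<otimes> v)" using D by (intro D_bal) auto
  finally show ?case using D by (intro bexI[of _ "E u \<otimes> v"]) auto
qed

lemma cent_lemma:
  assumes irr: "cent R S = {c \<odot> \<one> | c. True}" and y: "y \<in> carrier R1"
    and comm: "\<And>a. a \<in> carrier R \<Longrightarrow> incl a \<otimes>\<^bsub>R1\<^esub> y = y \<otimes>\<^bsub>R1\<^esub> incl a"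
  shows "\<exists>c. y = c \<odot>\<^bsub>R1\<^esub> \<one>\<^bsub>R1\<^esub>"
proof -
  obtain m where m: "m \<in> carrier R" "e \<otimes>\<^bsub>R1\<^esub> y = D \<one> m" using ey_exists[OF y] by blast
  have "m \<in> cent R S" unfolding cent_def
  proof (intro CollectI conjI ballI)
    show "m \<in> carrier R" by (rule m(1))
    fix s assume s: "s \<in> S"
    then have sc: "s \<in> carrier R" by simp
    have "D \<one> (m \<otimes> s) = e \<otimes>\<^bsub>R1\<^esub> y \<otimes>\<^bsub>R1\<^esub> incl s" using m sc by (simp add: D_mult_incl)
    also have "\<dots> = e \<otimes>\<^bsub>R1\<^esub> (incl s \<otimes>\<^bsub>R1\<^esub> y)" using y sc comm by (simp add: R1.m_assoc)
    also have "\<dots> = (incl s \<otimes>\<^bsub>R1\<^esub> e) \<otimes>\<^bsub>R1\<^esub> y" using y sc s by (simp add: R1.m_assoc[symmetric] e_comm)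
    also have "\<dots> = incl s \<otimes>\<^bsub>R1\<^esub> D \<one> m" using y sc m by (simp add: R1.m_assoc)
    also have "\<dots> = D (\<one> \<otimes> s) m" using sc m by (simp add: incl_mult_D)
    also have "\<dots> = D \<one> (s \<otimes> m)" using s m by (intro D_bal) auto
    finally have "D \<one> (m \<otimes> s) = D \<one> (s \<otimes> m)" .
    then show "m \<otimes> s = s \<otimes> m" using m sc by (intro D_inj2) auto
  qed
  then obtain c where c: "m = c \<odot> \<one>" using irr by auto
  have key: "D u v \<otimes>\<^bsub>R1\<^esub> y = c \<odot>\<^bsub>R1\<^esub> D u v" if u: "u \<in> carrier R" and v: "v \<in> carrier R" for u v
  proof -
    have "D u v \<otimes>\<^bsub>R1\<^esub> y = incl u \<otimes>\<^bsub>R1\<^esub> (e \<otimes>\<^bsub>R1\<^esub> (incl v \<otimes>\<^bsub>R1\<^esub> y))"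
      using u v y by (simp add: D_eq R1.m_assoc)
    also have "\<dots> = incl u \<otimes>\<^bsub>R1\<^esub> ((e \<otimes>\<^bsub>R1\<^esub> y) \<otimes>\<^bsub>R1\<^esub> incl v)"
      using u v y comm by (simp add: R1.m_assoc)
    also have "\<dots> = D u (m \<otimes> v)" using u v m by (simp add: D_mult_incl incl_mult_D)
    also have "\<dots> = c \<odot>\<^bsub>R1\<^esub> D u v" using u v by (simp add: c smult_ml D_smul2)
    finally show ?thesis .
  qed
  have "y = \<one>\<^bsub>R1\<^esub> \<otimes>\<^bsub>R1\<^esub> y" using y by simp
  also have "\<dots> = (\<Oplus>\<^bsub>R1\<^esub>i\<in>{..<length rs}. D (rs ! i) (ss ! i) \<otimes>\<^bsub>R1\<^esub> y)"
    using y by (simp add: one_sumD R1.finsum_ldistr Pi_def)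
  also have "\<dots> = (\<Oplus>\<^bsub>R1\<^esub>i\<in>{..<length rs}. c \<odot>\<^bsub>R1\<^esub> D (rs ! i) (ss ! i))"
    by (intro R1.finsum_cong'[OF refl]) (simp_all add: key)
  also have "\<dots> = c \<odot>\<^bsub>R1\<^esub> \<one>\<^bsub>R1\<^esub>" by (simp add: one_sumD R1.smult_finsum Pi_def)
  finally show ?thesis by blast
qed

lemma trace_id: assumes u: "u \<in> carrier R" and b: "b \<in> carrier R1"
  shows "E (ER (e \<otimes>\<^bsub>R1\<^esub> incl u \<otimes>\<^bsub>R1\<^esub> b)) = E (u \<otimes> ER (b \<otimes>\<^bsub>R1\<^esub> e))"
  using b
proof (induction b rule: R1_induct')
  case zero then show ?case using u by (simp add: ER_zero)
next
  case (add x y)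
  then show ?case using u by (simp add: R1.r_distr R1.l_distr ER_add r_distr E_plus)
next
  case (smul c x)
  then show ?case using u by (simp add: R1.smult_mr R1.smult_ml ER_smul smult_mr E_smult)
next
  case (D q1 q2)
  have "e \<otimes>\<^bsub>R1\<^esub> incl u \<otimes>\<^bsub>R1\<^esub> D q1 q2 = D (E (u \<otimes> q1)) q2"
    using D u by (simp add: R1.m_assoc incl_mult_D e_D D_mult)
  then have 1: "E (ER (e \<otimes>\<^bsub>R1\<^esub> incl u \<otimes>\<^bsub>R1\<^esub> D q1 q2)) = lam \<odot> (E (u \<otimes> q1) \<otimes> E q2)"
    using D u by (simp add: ER_D E_smult E_l)
  have "D q1 q2 \<otimes>\<^bsub>R1\<^esub> e = D (q1 \<otimes> E q2) \<one>" using D by (simp add: e_D D_mult)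
  then have "E (u \<otimes> ER (D q1 q2 \<otimes>\<^bsub>R1\<^esub> e)) = lam \<odot> E (u \<otimes> q1 \<otimes> E q2)"
    using D u by (simp add: ER_D smult_mr E_smult m_assoc)
  also have "\<dots> = lam \<odot> (E (u \<otimes> q1) \<otimes> E q2)" using D u by (simp add: E_r)
  finally show ?case using 1 by simp
qed

end

theorem proposition5p2:
  fixes M :: "('k::field, 'a) module" and N :: "'a set" and E :: "'a \<Rightarrow> 'a"
    and xs ys :: "'a list" and lam :: 'k
  assumes kalg: "kalg M"
    and sub: "subalg M N"
    and irred: "cent M N = {c \<odot>\<^bsub>M\<^esub> \<one>\<^bsub>M\<^esub> | c. True}"
    and E_into: "\<forall>m\<in>carrier M. E m \<in> N"
    and E_add: "\<forall>a\<in>carrier M. \<forall>b\<in>carrier M. E (a \<oplus>\<^bsub>M\<^esub> b) = E a \<oplus>\<^bsub>M\<^esub> E b"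
    and E_left: "\<forall>n\<in>N. \<forall>m\<in>carrier M. E (n \<otimes>\<^bsub>M\<^esub> m) = n \<otimes>\<^bsub>M\<^esub> E m"
    and E_right: "\<forall>n\<in>N. \<forall>m\<in>carrier M. E (m \<otimes>\<^bsub>M\<^esub> n) = E m \<otimes>\<^bsub>M\<^esub> n"
    and len: "length xs = length ys"
    and xs_in: "set xs \<subseteq> carrier M" and ys_in: "set ys \<subseteq> carrier M"
    and qb1: "\<forall>m\<in>carrier M.
       (\<Oplus>\<^bsub>M\<^esub>i\<in>{..<length xs}. E (m \<otimes>\<^bsub>M\<^esub> xs ! i) \<otimes>\<^bsub>M\<^esub> ys ! i) = m"
    and qb2: "\<forall>m\<in>carrier M.
       (\<Oplus>\<^bsub>M\<^esub>i\<in>{..<length xs}. xs ! i \<otimes>\<^bsub>M\<^esub> E (ys ! i \<otimes>\<^bsub>M\<^esub> m)) = m"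
    and E1: "E \<one>\<^bsub>M\<^esub> = \<one>\<^bsub>M\<^esub>"
    and lam_nz: "lam \<noteq> 0"
    and xy: "(\<Oplus>\<^bsub>M\<^esub>i\<in>{..<length xs}. xs ! i \<otimes>\<^bsub>M\<^esub> ys ! i) = inverse lam \<odot>\<^bsub>M\<^esub> \<one>\<^bsub>M\<^esub>"
  assumes depth2_1: "free_right_basis_in (twM1 M N E xs ys) (twi1 M N xs ys ` carrier M) (twA M N E xs ys)"
    and depth2_2: "free_right_basis_in (twM2 M N E xs ys lam)
         (twi2 M N E xs ys lam ` carrier (twM1 M N E xs ys)) (twB M N E xs ys lam)"
  shows "{x \<in> carrier (twM1 M N E xs ys). \<forall>b\<in>twB M N E xs ys lam.
            act M N E xs ys lam b x = counit M N E xs ys lam b \<odot>\<^bsub>twM1 M N E xs ys\<^esub> x}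
         = twi1 M N xs ys ` carrier M"
proof -
  interpret L1: bcl M N E xs ys lam
    by (rule bcl.intro[OF kal.intro[OF kalg] bcl_axioms.intro[OF sub E_into E_add E_left E_right len xs_in ys_in qb1 qb2 E1 lam_nz xy]])
  interpret L2: bcl "bc M N E xs ys" "bc_incl M N xs ys ` carrier M" "bc_incl M N xs ys \<circ> bc_E M lam"
      "bc_left M N lam xs" "bc_right M N ys" lam
    by (rule L1.bcl_next)
  let ?M1 = "bc M N E xs ys"
  let ?i1 = "bc_incl M N xs ys"
  let ?e1 = "bc_jones M N"
  let ?E1 = "bc_E M lam"
  let ?M2 = "bc ?M1 (?i1 ` carrier M) (?i1 \<circ> ?E1) (bc_left M N lam xs) (bc_right M N ys)"
  let ?i2 = "bc_incl ?M1 (?i1 ` carrier M) (bc_left M N lam xs) (bc_right M N ys)"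
  let ?e2 = "bc_jones ?M1 (?i1 ` carrier M)"
  let ?E2 = "bc_E ?M1 lam"
  let ?B = "cent ?M2 ((?i2 \<circ> ?i1) ` carrier M)"
  have e1_in: "?e1 \<in> carrier ?M1" by (rule L1.e_in)
  have ER1_e1: "?E1 ?e1 = lam \<odot>\<^bsub>M\<^esub> \<one>\<^bsub>M\<^esub>" by (simp add: L1.e_D L1.ER_D)
  have e2_in: "?e2 \<in> carrier ?M2" by (rule L2.e_in)
  have act_in: "inverse lam \<odot>\<^bsub>?M1\<^esub> ?E2 (b \<otimes>\<^bsub>?M2\<^esub> ?i2 x \<otimes>\<^bsub>?M2\<^esub> ?e2) \<in> carrier ?M1"
    if "b \<in> carrier ?M2" "x \<in> carrier ?M1" for b x
    using that by simp
  have B_sub: "?B \<subseteq> carrier ?M2" by (auto simp: cent_def)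
  have main: "{x \<in> carrier ?M1. \<forall>b\<in>?B.
      inverse lam \<odot>\<^bsub>?M1\<^esub> ?E2 (b \<otimes>\<^bsub>?M2\<^esub> ?i2 x \<otimes>\<^bsub>?M2\<^esub> ?e2) =
      (inverse lam ^ 2 * (THE c. (?E1 \<circ> ?E2) (?e2 \<otimes>\<^bsub>?M2\<^esub> ?i2 ?e1 \<otimes>\<^bsub>?M2\<^esub> b) = c \<odot>\<^bsub>M\<^esub> \<one>\<^bsub>M\<^esub>))
        \<odot>\<^bsub>?M1\<^esub> x} = ?i1 ` carrier M"
  proof (cases "\<one>\<^bsub>M\<^esub> = \<zero>\<^bsub>M\<^esub>")
    case True
    have all0: "X = \<zero>\<^bsub>?M1\<^esub>" if X: "X \<in> carrier ?M1" for X
    proof -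
      have "X = ?i1 \<one>\<^bsub>M\<^esub> \<otimes>\<^bsub>?M1\<^esub> X" using X by (simp add: L1.incl_one)
      also have "\<dots> = ?i1 \<zero>\<^bsub>M\<^esub> \<otimes>\<^bsub>?M1\<^esub> X" using True by simp
      also have "\<dots> = \<zero>\<^bsub>?M1\<^esub>" using X by (simp add: L1.incl_zero)
      finally show ?thesis .
    qed
    show ?thesis
    proof (intro equalityI subsetI)
      fix x assume "x \<in> {x \<in> carrier ?M1. \<forall>b\<in>?B.
        inverse lam \<odot>\<^bsub>?M1\<^esub> ?E2 (b \<otimes>\<^bsub>?M2\<^esub> ?i2 x \<otimes>\<^bsub>?M2\<^esub> ?e2) =
        (inverse lam ^ 2 * (THE c. (?E1 \<circ> ?E2) (?e2 \<otimes>\<^bsub>?M2\<^esub> ?i2 ?e1 \<otimes>\<^bsub>?M2\<^esub> b) = c \<odot>\<^bsub>M\<^esub> \<one>\<^bsub>M\<^esub>))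
          \<odot>\<^bsub>?M1\<^esub> x}"
      then have "x = ?i1 \<zero>\<^bsub>M\<^esub>" using all0 by (simp add: L1.incl_zero)
      then show "x \<in> ?i1 ` carrier M" by simp
    next
      fix x assume x: "x \<in> ?i1 ` carrier M"
      then have xc: "x \<in> carrier ?M1" by auto
      show "x \<in> {x \<in> carrier ?M1. \<forall>b\<in>?B.
        inverse lam \<odot>\<^bsub>?M1\<^esub> ?E2 (b \<otimes>\<^bsub>?M2\<^esub> ?i2 x \<otimes>\<^bsub>?M2\<^esub> ?e2) =
        (inverse lam ^ 2 * (THE c. (?E1 \<circ> ?E2) (?e2 \<otimes>\<^bsub>?M2\<^esub> ?i2 ?e1 \<otimes>\<^bsub>?M2\<^esub> b) = c \<odot>\<^bsub>M\<^esub> \<one>\<^bsub>M\<^esub>))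
          \<odot>\<^bsub>?M1\<^esub> x}"
      proof (intro CollectI conjI ballI xc)
        fix b assume "b \<in> ?B"
        then have b: "b \<in> carrier ?M2" using B_sub by auto
        have "inverse lam \<odot>\<^bsub>?M1\<^esub> ?E2 (b \<otimes>\<^bsub>?M2\<^esub> ?i2 x \<otimes>\<^bsub>?M2\<^esub> ?e2) = \<zero>\<^bsub>?M1\<^esub>"
          by (rule all0) (rule act_in[OF b xc])
        moreover have "(inverse lam ^ 2 * (THE c. (?E1 \<circ> ?E2) (?e2 \<otimes>\<^bsub>?M2\<^esub> ?i2 ?e1 \<otimes>\<^bsub>?M2\<^esub> b) = c \<odot>\<^bsub>M\<^esub> \<one>\<^bsub>M\<^esub>))
          \<odot>\<^bsub>?M1\<^esub> x = \<zero>\<^bsub>?M1\<^esub>"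
          by (rule all0) (simp add: xc)
        ultimately show "inverse lam \<odot>\<^bsub>?M1\<^esub> ?E2 (b \<otimes>\<^bsub>?M2\<^esub> ?i2 x \<otimes>\<^bsub>?M2\<^esub> ?e2) =
          (inverse lam ^ 2 * (THE c. (?E1 \<circ> ?E2) (?e2 \<otimes>\<^bsub>?M2\<^esub> ?i2 ?e1 \<otimes>\<^bsub>?M2\<^esub> b) = c \<odot>\<^bsub>M\<^esub> \<one>\<^bsub>M\<^esub>))
          \<odot>\<^bsub>?M1\<^esub> x" by simp
      qed
    qed
  next
    case False
    have THE_eq: "(THE c'. d \<odot>\<^bsub>M\<^esub> \<one>\<^bsub>M\<^esub> = c' \<odot>\<^bsub>M\<^esub> \<one>\<^bsub>M\<^esub>) = d" for d
      using L1.smult_eq_imp[OF False] by (intro the_equality) auto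
    have lamsq: "inverse lam ^ 2 * (lam * lam) = 1" using lam_nz by (simp add: power2_eq_square field_simps)
    have e2B: "?e2 \<in> ?B"
      unfolding cent_def using e2_in by (auto intro!: L2.e_comm)
    have act_e2: "inverse lam \<odot>\<^bsub>?M1\<^esub> ?E2 (?e2 \<otimes>\<^bsub>?M2\<^esub> ?i2 x \<otimes>\<^bsub>?M2\<^esub> ?e2) = ?i1 (?E1 x)"
      if x: "x \<in> carrier ?M1" for x
    proof -
      have "?e2 \<otimes>\<^bsub>?M2\<^esub> ?i2 x \<otimes>\<^bsub>?M2\<^esub> ?e2 = ?i2 (?i1 (?E1 x)) \<otimes>\<^bsub>?M2\<^esub> ?e2"
        using L2.eae[OF x] by simp
      then have "?E2 (?e2 \<otimes>\<^bsub>?M2\<^esub> ?i2 x \<otimes>\<^bsub>?M2\<^esub> ?e2) = lam \<odot>\<^bsub>?M1\<^esub> ?i1 (?E1 x)"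
        using x by (simp add: L2.ER_incl_e)
      then show ?thesis using x by (simp add: L1.lam_cancel1)
    qed
    have cu_e2: "(THE c. (?E1 \<circ> ?E2) (?e2 \<otimes>\<^bsub>?M2\<^esub> ?i2 ?e1 \<otimes>\<^bsub>?M2\<^esub> ?e2) = c \<odot>\<^bsub>M\<^esub> \<one>\<^bsub>M\<^esub>) = lam * lam"
    proof -
      have "?e2 \<otimes>\<^bsub>?M2\<^esub> ?i2 ?e1 \<otimes>\<^bsub>?M2\<^esub> ?e2 = ?i2 (?i1 (?E1 ?e1)) \<otimes>\<^bsub>?M2\<^esub> ?e2"
        using L2.eae[OF e1_in] by simp
      then have "?E2 (?e2 \<otimes>\<^bsub>?M2\<^esub> ?i2 ?e1 \<otimes>\<^bsub>?M2\<^esub> ?e2) = lam \<odot>\<^bsub>?M1\<^esub> ?i1 (?E1 ?e1)"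
        using e1_in by (simp add: L2.ER_incl_e)
      then have "(?E1 \<circ> ?E2) (?e2 \<otimes>\<^bsub>?M2\<^esub> ?i2 ?e1 \<otimes>\<^bsub>?M2\<^esub> ?e2) = (lam * lam) \<odot>\<^bsub>M\<^esub> \<one>\<^bsub>M\<^esub>"
        using e1_in by (simp add: L1.ER_smul L1.ER_incl ER1_e1 L1.smult_assoc)
      then show ?thesis by (simp add: THE_eq)
    qed
    show ?thesis
    proof (intro equalityI subsetI)
      fix x assume "x \<in> {x \<in> carrier ?M1. \<forall>b\<in>?B.
        inverse lam \<odot>\<^bsub>?M1\<^esub> ?E2 (b \<otimes>\<^bsub>?M2\<^esub> ?i2 x \<otimes>\<^bsub>?M2\<^esub> ?e2) =
        (inverse lam ^ 2 * (THE c. (?E1 \<circ> ?E2) (?e2 \<otimes>\<^bsub>?M2\<^esub> ?i2 ?e1 \<otimes>\<^bsub>?M2\<^esub> b) = c \<odot>\<^bsub>M\<^esub> \<one>\<^bsub>M\<^esub>))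
          \<odot>\<^bsub>?M1\<^esub> x}"
      then have x: "x \<in> carrier ?M1" and h: "inverse lam \<odot>\<^bsub>?M1\<^esub> ?E2 (?e2 \<otimes>\<^bsub>?M2\<^esub> ?i2 x \<otimes>\<^bsub>?M2\<^esub> ?e2) =
        (inverse lam ^ 2 * (THE c. (?E1 \<circ> ?E2) (?e2 \<otimes>\<^bsub>?M2\<^esub> ?i2 ?e1 \<otimes>\<^bsub>?M2\<^esub> ?e2) = c \<odot>\<^bsub>M\<^esub> \<one>\<^bsub>M\<^esub>))
          \<odot>\<^bsub>?M1\<^esub> x"
        using e2B by auto
      have "x = ?i1 (?E1 x)" using h x by (simp add: act_e2 cu_e2[simplified] lamsq)
      then show "x \<in> ?i1 ` carrier M" using x by (metis image_eqI L1.ER_in)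
    next
      fix x assume "x \<in> ?i1 ` carrier M"
      then obtain m where m: "m \<in> carrier M" and xm: "x = ?i1 m" by auto
      have x: "x \<in> carrier ?M1" using m xm by simp
      have "inverse lam \<odot>\<^bsub>?M1\<^esub> ?E2 (b \<otimes>\<^bsub>?M2\<^esub> ?i2 x \<otimes>\<^bsub>?M2\<^esub> ?e2) =
        (inverse lam ^ 2 * (THE c. (?E1 \<circ> ?E2) (?e2 \<otimes>\<^bsub>?M2\<^esub> ?i2 ?e1 \<otimes>\<^bsub>?M2\<^esub> b) = c \<odot>\<^bsub>M\<^esub> \<one>\<^bsub>M\<^esub>))
          \<odot>\<^bsub>?M1\<^esub> x" if bB: "b \<in> ?B" for b
      proof -
        have b: "b \<in> carrier ?M2" using bB by (simp add: cent_def)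
        have bcomm: "b \<otimes>\<^bsub>?M2\<^esub> ?i2 (?i1 a) = ?i2 (?i1 a) \<otimes>\<^bsub>?M2\<^esub> b" if "a \<in> carrier M" for a
          using bB that by (auto simp: cent_def)
        define y where "y = ?E2 (b \<otimes>\<^bsub>?M2\<^esub> ?e2)"
        have y: "y \<in> carrier ?M1" using b by (simp add: y_def)
        have act_b: "?E2 (b \<otimes>\<^bsub>?M2\<^esub> ?i2 x \<otimes>\<^bsub>?M2\<^esub> ?e2) = x \<otimes>\<^bsub>?M1\<^esub> y"
        proof -
          have "b \<otimes>\<^bsub>?M2\<^esub> ?i2 x \<otimes>\<^bsub>?M2\<^esub> ?e2 = ?i2 x \<otimes>\<^bsub>?M2\<^esub> (b \<otimes>\<^bsub>?M2\<^esub> ?e2)"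
            using bcomm[OF m] b x xm by (simp add: L2.R1.m_assoc)
          then show ?thesis using x b by (simp add: L2.ER_left y_def)
        qed
        have ycomm: "?i1 a \<otimes>\<^bsub>?M1\<^esub> y = y \<otimes>\<^bsub>?M1\<^esub> ?i1 a" if a: "a \<in> carrier M" for a
        proof -
          have ia: "?i1 a \<in> carrier ?M1" "?i1 a \<in> ?i1 ` carrier M" using a by auto
          have "?i1 a \<otimes>\<^bsub>?M1\<^esub> y = ?E2 (?i2 (?i1 a) \<otimes>\<^bsub>?M2\<^esub> (b \<otimes>\<^bsub>?M2\<^esub> ?e2))"
            using ia b by (simp add: L2.ER_left y_def)
          also have "\<dots> = ?E2 (b \<otimes>\<^bsub>?M2\<^esub> (?i2 (?i1 a) \<otimes>\<^bsub>?M2\<^esub> ?e2))"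
            using ia b bcomm[OF a] by (simp add: L2.R1.m_assoc[symmetric])
          also have "\<dots> = ?E2 (b \<otimes>\<^bsub>?M2\<^esub> (?e2 \<otimes>\<^bsub>?M2\<^esub> ?i2 (?i1 a)))"
            using L2.e_comm[OF ia(2)] by simp
          also have "\<dots> = y \<otimes>\<^bsub>?M1\<^esub> ?i1 a"
            using ia b by (simp add: L2.R1.m_assoc[symmetric] L2.ER_right y_def)
          finally show ?thesis .
        qed
        obtain c where c: "y = c \<odot>\<^bsub>?M1\<^esub> \<one>\<^bsub>?M1\<^esub>"
          using L1.cent_lemma[OF irred y] ycomm by blast
        have lhs: "inverse lam \<odot>\<^bsub>?M1\<^esub> ?E2 (b \<otimes>\<^bsub>?M2\<^esub> ?i2 x \<otimes>\<^bsub>?M2\<^esub> ?e2) = (inverse lam * c) \<odot>\<^bsub>?M1\<^esub> x"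
          using x by (simp add: act_b c L1.R1.smult_mr L1.R1.smult_assoc)
        have tr: "(?i1 \<circ> ?E1) (?E2 (?e2 \<otimes>\<^bsub>?M2\<^esub> ?i2 ?e1 \<otimes>\<^bsub>?M2\<^esub> b)) = (?i1 \<circ> ?E1) (?e1 \<otimes>\<^bsub>?M1\<^esub> y)"
          using L2.trace_id[OF e1_in b] by (simp add: y_def)
        have "?E1 (?E2 (?e2 \<otimes>\<^bsub>?M2\<^esub> ?i2 ?e1 \<otimes>\<^bsub>?M2\<^esub> b)) = ?E1 (?e1 \<otimes>\<^bsub>?M1\<^esub> y)"
          using tr e1_in b y by (intro L1.incl_inj) auto
        also have "\<dots> = (c * lam) \<odot>\<^bsub>M\<^esub> \<one>\<^bsub>M\<^esub>"
          using e1_in by (simp add: c L1.R1.smult_mr L1.ER_smul ER1_e1 L1.smult_assoc)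
        finally have th: "(THE c'. (?E1 \<circ> ?E2) (?e2 \<otimes>\<^bsub>?M2\<^esub> ?i2 ?e1 \<otimes>\<^bsub>?M2\<^esub> b) = c' \<odot>\<^bsub>M\<^esub> \<one>\<^bsub>M\<^esub>) = c * lam"
          by (simp add: THE_eq)
        have ar: "inverse lam ^ 2 * (c * lam) = inverse lam * c"
          using lam_nz by (simp add: power2_eq_square field_simps)
        show ?thesis unfolding lhs th ar ..
      qed
      then show "x \<in> {x \<in> carrier ?M1. \<forall>b\<in>?B.
        inverse lam \<odot>\<^bsub>?M1\<^esub> ?E2 (b \<otimes>\<^bsub>?M2\<^esub> ?i2 x \<otimes>\<^bsub>?M2\<^esub> ?e2) =
        (inverse lam ^ 2 * (THE c. (?E1 \<circ> ?E2) (?e2 \<otimes>\<^bsub>?M2\<^esub> ?i2 ?e1 \<otimes>\<^bsub>?M2\<^esub> b) = c \<odot>\<^bsub>M\<^esub> \<one>\<^bsub>M\<^esub>))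
          \<odot>\<^bsub>?M1\<^esub> x}"
        using x by blast
    qed
  qed
  show ?thesis
    unfolding act_def counit_def twF_def twB_def twM2_def twi2_def twe2_def twEM1_def
      twM1_def twi1_def twe1_def twEM_def
    using main by simp
qed

end
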